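(* Let $G$ be a connected graph and $U\subseteq V(G)$ such that every $U$-rooted minor of $G$ with countable branch sets has countable colouring number. Let $(T,\mathcal V)$ be a slim $U$-rooted normal semi-partition tree of $G$ with $U\subseteq V(G(T))$. Then every infinite set $X\subseteq T$ is included in a rooted subtree $T'\subseteq T$ with $|T'|=|X|$ such that $G(T')$ has finite adhesion in $G$ towards $U$.
   Context: Minors are given by disjoint connected branch sets; a minor is $U$-rooted if every branch set meets $U$. Countable colouring number: a well-order of the vertices in which each vertex is preceded by only finitely many neighbours. An order tree is a poset with unique minimal element in which every down-closure $\lceil t\rceil$ is well-ordered; $\mathring{\lceil t\rceil}=\lceil t\rceil\setminus\{t\}$; height of $t$ = order type of $\mathring{\lceil t\rceil}$; rooted subtree = down-closed subset. A $T$-graph is a graph on $T$ whose edges have comparable endvertices and where the lower neighbours of each $t$ are cofinal in $\mathring{\lceil t\rceil}$. $(T,(V_t)_{t\in T})$ with nonempty $V_t\subseteq V(G)$ is a normal semi-partition tree if the $V_t$ are pairwise disjoint, each $G[V_t]$ connected, contracting each $V_t$ in $G[\bigcup V_t]$ gives a $T$-graph, and for every path in $G$ with at least one edge, endvertices in $V_t,V_{t'}$, inner vertices outside $\bigcup V_s$ and no edges inside $G[\bigcup V_s]$, $t,t'$ are comparable. Slim: $|V_t|\le|\mathrm{height}(t)|+\aleph_0$; $U$-rooted: each $V_t$ meets $U$. $G(S)=G[\bigcup_{t\in S}V_t]$. An induced subgraph $H$ has finite adhesion in $G$ towards $U$ if every component of $G-H$ containing a vertex of $U$ has only finitely many neighbours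 in $H$. *)

theory Defs
  imports Main "HOL-Library.Equipollence" "HOL-Library.Countable_Set"
begin

definition graph :: "'v set \<Rightarrow> ('v \<times> 'v) set \<Rightarrow> bool" where
  "graph VG E \<longleftrightarrow> E \<subseteq> VG \<times> VG \<and> sym E \<and> irrefl E"

definition connected_in :: "('v \<times> 'v) set \<Rightarrow> 'v set \<Rightarrow> bool" where
  "connected_in E S \<longleftrightarrow> S \<noteq> {} \<and> (\<forall>x\<in>S. \<forall>y\<in>S. (x, y) \<in> (E \<inter> (S \<times> S))\<^sup>*)"

text \<open>The minor is represented with its vertex set
being the family B of (pairwise disjoint, nonempty, connected) branch sets
themselves; F is the edge relation of the minor, and every edge of the minor
is witnessed by an edge of G between the two branch sets.\<close>
definition minor_by_branch_sets ::
  "'v set \<Rightarrow> ('v \<times> 'v) set \<Rightarrow> 'v set set \<Rightarrow> ('v set \<times> 'v set) set \<Rightarrow> bool" where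
  "minor_by_branch_sets VG E B F \<longleftrightarrow>
     (\<forall>b\<in>B. b \<subseteq> VG \<and> connected_in E b) \<and> pairwise disjnt B \<and> graph B F \<and>
     (\<forall>(a, b)\<in>F. \<exists>x\<in>a. \<exists>y\<in>b. (x, y) \<in> E)"

definition rooted_minor ::
  "'v set \<Rightarrow> ('v \<times> 'v) set \<Rightarrow> 'v set \<Rightarrow> 'v set set \<Rightarrow> ('v set \<times> 'v set) set \<Rightarrow> bool" where
  "rooted_minor VG E U B F \<longleftrightarrow> minor_by_branch_sets VG E B F \<and> (\<forall>b\<in>B. b \<inter> U \<noteq> {})"

definition countable_colouring_number :: "'a set \<Rightarrow> ('a \<times> 'a) set \<Rightarrow> bool" where
  "countable_colouring_number VH F \<longleftrightarrow>
     (\<exists>r. well_order_on VH r \<and>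
          (\<forall>x\<in>VH. finite {y\<in>VH. (y, x) \<in> r \<and> y \<noteq> x \<and> (y, x) \<in> F}))"

definition component_of :: "'v set \<Rightarrow> ('v \<times> 'v) set \<Rightarrow> 'v set \<Rightarrow> 'v set \<Rightarrow> bool" where
  "component_of VG E W C \<longleftrightarrow> C \<subseteq> VG - W \<and> connected_in E C \<and>
     (\<forall>C'. C \<subseteq> C' \<and> C' \<subseteq> VG - W \<and> connected_in E C' \<longrightarrow> C' = C)"

definition finite_adhesion_towards ::
  "'v set \<Rightarrow> ('v \<times> 'v) set \<Rightarrow> 'v set \<Rightarrow> 'v set \<Rightarrow> bool" where
  "finite_adhesion_towards VG E W U \<longleftrightarrow>
     (\<forall>C. component_of VG E W C \<and> C \<inter> U \<noteq> {} \<longrightarrow>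
          finite {w\<in>W. \<exists>c\<in>C. (c, w) \<in> E})"

definition down :: "'t set \<Rightarrow> ('t \<times> 't) set \<Rightarrow> 't \<Rightarrow> 't set" where
  "down T le t = {s\<in>T. (s, t) \<in> le}"

definition sdown :: "'t set \<Rightarrow> ('t \<times> 't) set \<Rightarrow> 't \<Rightarrow> 't set" where
  "sdown T le t = {s\<in>T. (s, t) \<in> le \<and> s \<noteq> t}"

definition order_tree :: "'t set \<Rightarrow> ('t \<times> 't) set \<Rightarrow> bool" where
  "order_tree T le \<longleftrightarrow> le \<subseteq> T \<times> T \<and> partial_order_on T le \<and>
     (\<exists>!r. r \<in> T \<and> (\<forall>s\<in>T. (s, r) \<in> le \<longrightarrow> s = r)) \<and>
     (\<forall>t\<in>T. well_order_on (down T le t) (Restr le (down T le t)))"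

definition comparable :: "('t \<times> 't) set \<Rightarrow> 't \<Rightarrow> 't \<Rightarrow> bool" where
  "comparable le s t \<longleftrightarrow> (s, t) \<in> le \<or> (t, s) \<in> le"

definition rooted_subtree :: "'t set \<Rightarrow> ('t \<times> 't) set \<Rightarrow> 't set \<Rightarrow> bool" where
  "rooted_subtree T le T' \<longleftrightarrow> T' \<subseteq> T \<and> (\<forall>t\<in>T'. \<forall>s\<in>T. (s, t) \<in> le \<longrightarrow> s \<in> T')"

definition T_graph :: "'t set \<Rightarrow> ('t \<times> 't) set \<Rightarrow> ('t \<times> 't) set \<Rightarrow> bool" where
  "T_graph T le F \<longleftrightarrow> graph T F \<and> (\<forall>(s, t)\<in>F. comparable le s t) \<and>
     (\<forall>t\<in>T. \<forall>s\<in>sdown T le t. \<exists>u\<in>sdown T le t. (s, u) \<in> le \<and> (u, t) \<in> F)"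

definition parts_union :: "('t \<Rightarrow> 'v set) \<Rightarrow> 't set \<Rightarrow> 'v set" where
  "parts_union Vt S = (\<Union>t\<in>S. Vt t)"

definition contracted_graph ::
  "('v \<times> 'v) set \<Rightarrow> 't set \<Rightarrow> ('t \<Rightarrow> 'v set) \<Rightarrow> ('t \<times> 't) set" where
  "contracted_graph E T Vt = {(s, t). s \<in> T \<and> t \<in> T \<and> s \<noteq> t \<and>
      (\<exists>x\<in>Vt s. \<exists>y\<in>Vt t. (x, y) \<in> E)}"

definition is_path :: "'v set \<Rightarrow> ('v \<times> 'v) set \<Rightarrow> 'v list \<Rightarrow> bool" where
  "is_path VG E xs \<longleftrightarrow> xs \<noteq> [] \<and> distinct xs \<and> set xs \<subseteq> VG \<and>
     (\<forall>i. Suc i < length xs \<longrightarrow> (xs ! i, xs ! Suc i) \<in> E)"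

definition normal_semi_partition_tree ::
  "'v set \<Rightarrow> ('v \<times> 'v) set \<Rightarrow> 't set \<Rightarrow> ('t \<times> 't) set \<Rightarrow> ('t \<Rightarrow> 'v set) \<Rightarrow> bool" where
  "normal_semi_partition_tree VG E T le Vt \<longleftrightarrow>
     order_tree T le \<and>
     (\<forall>t\<in>T. Vt t \<noteq> {} \<and> Vt t \<subseteq> VG \<and> connected_in E (Vt t)) \<and>
     (\<forall>s\<in>T. \<forall>t\<in>T. s \<noteq> t \<longrightarrow> Vt s \<inter> Vt t = {}) \<and>
     T_graph T le (contracted_graph E T Vt) \<and>
     (\<forall>xs s t. is_path VG E xs \<and> length xs \<ge> 2 \<and> s \<in> T \<and> t \<in> T \<and>
        hd xs \<in> Vt s \<and> last xs \<in> Vt t \<and>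
        set (butlast (tl xs)) \<inter> parts_union Vt T = {} \<and>
        (\<forall>i. Suc i < length xs \<longrightarrow>
             \<not> (xs ! i \<in> parts_union Vt T \<and> xs ! Suc i \<in> parts_union Vt T))
        \<longrightarrow> comparable le s t)"

text \<open>Slim: |V_t| \<le> |height(t)| + aleph_0, where |height(t)| = |strict down-closure of t|;
the cardinal sum is realised as a disjoint sum with the naturals.\<close>
definition slim :: "'t set \<Rightarrow> ('t \<times> 't) set \<Rightarrow> ('t \<Rightarrow> 'v set) \<Rightarrow> bool" where
  "slim T le Vt \<longleftrightarrow> (\<forall>t\<in>T. Vt t \<lesssim> (sdown T le t <+> (UNIV :: nat set)))"

definition U_rooted_parts :: "'t set \<Rightarrow> ('t \<Rightarrow> 'v set) \<Rightarrow> 'v set \<Rightarrow> bool" where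
  "U_rooted_parts T Vt U \<longleftrightarrow> (\<forall>t\<in>T. Vt t \<inter> U \<noteq> {})"

end

theory Submission
  imports Defs
begin

definition comp :: "'v set \<Rightarrow> ('v \<times> 'v) set \<Rightarrow> 'v set \<Rightarrow> 'v \<Rightarrow> 'v set" where
  "comp VG E W x = {y. (x, y) \<in> (E \<inter> ((VG - W) \<times> (VG - W)))\<^sup>*}"

lemma rt_mono: "(x, y) \<in> r\<^sup>* \<Longrightarrow> r \<subseteq> s \<Longrightarrow> (x, y) \<in> s\<^sup>*"
  using rtrancl_mono by blast

lemma rtrancl_sym:
  assumes "sym R" "(x, y) \<in> R\<^sup>*" shows "(y, x) \<in> R\<^sup>*"
  using assms(2)
proof induct
  case base then show ?case by simp
next
  case (step y z)
  then have "(z, y) \<in> R" using assms(1) by (auto dest: symD)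
  then show ?case using step by (meson converse_rtrancl_into_rtrancl)
qed

lemma sym_restr: "sym E \<Longrightarrow> sym (E \<inter> (S \<times> S))"
  by (auto simp: sym_def)

lemma connected_in_single: "connected_in E {x}"
  by (auto simp: connected_in_def)

lemma rtrancl_restr_mono:
  "(x, y) \<in> (E \<inter> (A \<times> A))\<^sup>* \<Longrightarrow> A \<subseteq> B \<Longrightarrow> (x, y) \<in> (E \<inter> (B \<times> B))\<^sup>*"
  by (erule rt_mono) blast

lemma connected_Union_common:
  assumes "\<forall>A\<in>\<A>. connected_in E A \<and> u \<in> A" "\<A> \<noteq> {}" "sym E"
  shows "connected_in E (\<Union>\<A>)"
  unfolding connected_in_def
proof (intro conjI ballI)
  show "\<Union>\<A> \<noteq> {}" using assms by auto
  fix x y assume "x \<in> \<Union>\<A>" "y \<in> \<Union>\<A>"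
  then obtain A B where AB: "A \<in> \<A>" "B \<in> \<A>" "x \<in> A" "y \<in> B" by auto
  have "(x, u) \<in> (E \<inter> (A \<times> A))\<^sup>*" using assms(1) AB by (auto simp: connected_in_def)
  then have 1: "(x, u) \<in> (E \<inter> (\<Union>\<A> \<times> \<Union>\<A>))\<^sup>*" by (rule rtrancl_restr_mono) (use AB in auto)
  have "(u, y) \<in> (E \<inter> (B \<times> B))\<^sup>*" using assms(1) AB by (auto simp: connected_in_def)
  then have 2: "(u, y) \<in> (E \<inter> (\<Union>\<A> \<times> \<Union>\<A>))\<^sup>*" by (rule rtrancl_restr_mono) (use AB in auto)
  show "(x, y) \<in> (E \<inter> (\<Union>\<A> \<times> \<Union>\<A>))\<^sup>*" using 1 2 by simp
qed

lemma connected_Un: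
  assumes "connected_in E A" "connected_in E B" "u \<in> A" "u \<in> B" "sym E"
  shows "connected_in E (A \<union> B)"
proof -
  have "\<forall>X\<in>{A,B}. connected_in E X \<and> u \<in> X" using assms by auto
  then have "connected_in E (\<Union>{A,B})" using connected_Union_common[of "{A,B}" E u] assms(5) by blast
  then show ?thesis by simp
qed

lemma connected_insert_edge:
  assumes "connected_in E P" "y \<in> P" "(y, z) \<in> E" "sym E"
  shows "connected_in E (insert z P)"
proof -
  have c: "connected_in E {y, z}"
    unfolding connected_in_def
  proof (intro conjI ballI)
    fix a b assume ab: "a \<in> {y, z}" "b \<in> {y, z}"
    have 1: "(y, z) \<in> (E \<inter> ({y,z} \<times> {y,z}))\<^sup>*" by (rule r_into_rtrancl) (use assms(3) in blast)
    have "(z, y) \<in> E" using assms(3,4) by (blast dest: symD)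
    then have 2: "(z, y) \<in> (E \<inter> ({y,z} \<times> {y,z}))\<^sup>*" by (intro r_into_rtrancl) blast
    show "(a, b) \<in> (E \<inter> ({y, z} \<times> {y, z}))\<^sup>*"
    proof (cases "a = b")
      case True then show ?thesis by simp
    next
      case False
      then have "(a = y \<and> b = z) \<or> (a = z \<and> b = y)" using ab by blast
      then show ?thesis using 1 2 by (elim disjE conjE) simp_all
    qed
  qed simp
  have cc: "connected_in E (P \<union> {y, z})" by (rule connected_Un[OF assms(1) c assms(2) _ assms(4)]) simp
  have eq: "P \<union> {y, z} = insert z P" using assms(2) by auto
  show ?thesis using cc unfolding eq .
qed

lemma finite_connected_path:
  assumes "(x, y) \<in> (E \<inter> (D \<times> D))\<^sup>*" "x \<in> D" "sym E"
  shows "\<exists>P. finite P \<and> P \<subseteq> D \<and> x \<in> P \<and> y \<in> P \<and> connected_in E P"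
  using assms(1)
proof induct
  case base then show ?case using assms(2) connected_in_single by (intro exI[of _ "{x}"]) auto
next
  case (step y z)
  then obtain P where P: "finite P" "P \<subseteq> D" "x \<in> P" "y \<in> P" "connected_in E P" by blast
  have "(y, z) \<in> E" "z \<in> D" using step(2) by auto
  then have "connected_in E (insert z P)" using connected_insert_edge[OF P(5) P(4) _ assms(3)] by blast
  then show ?case using P \<open>z \<in> D\<close> by (intro exI[of _ "insert z P"]) blast
qed

lemma comp_sub: "comp VG E W x \<subseteq> insert x (VG - W)"
proof
  fix y assume "y \<in> comp VG E W x"
  then have "(x, y) \<in> (E \<inter> ((VG - W) \<times> (VG - W)))\<^sup>*" by (simp add: comp_def)
  then show "y \<in> insert x (VG - W)" by induct auto
qed

lemma comp_self: "x \<in> comp VG E W x" by (simp add: comp_def)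

lemma comp_sub2: "x \<in> VG - W \<Longrightarrow> comp VG E W x \<subseteq> VG - W"
  using comp_sub by fastforce

lemma comp_connected:
  assumes "x \<in> VG - W" "sym E"
  shows "connected_in E (comp VG E W x)"
  unfolding connected_in_def
proof (intro conjI ballI)
  show "comp VG E W x \<noteq> {}" using comp_self by fast
  let ?R = "E \<inter> ((VG - W) \<times> (VG - W))"
  let ?C = "comp VG E W x"
  have key: "(x, y) \<in> (E \<inter> (?C \<times> ?C))\<^sup>*" if "y \<in> ?C" for y
  proof -
    have "(x, y) \<in> ?R\<^sup>*" using that by (simp add: comp_def)
    then show ?thesis
    proof induct
      case (step y z)
      have yC: "y \<in> ?C" using step(1) by (simp add: comp_def)
      have "(x, z) \<in> ?R\<^sup>*" using step(1,2) by (rule rtrancl_into_rtrancl)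
      then have zC: "z \<in> ?C" by (simp add: comp_def)
      have "(y, z) \<in> E \<inter> (?C \<times> ?C)" using step(2) yC zC by blast
      then show ?case using step(3) by (rule rtrancl_into_rtrancl[rotated])
    qed simp
  qed
  fix a b assume "a \<in> ?C" "b \<in> ?C"
  then have "(a, x) \<in> (E \<inter> (?C \<times> ?C))\<^sup>*" "(x, b) \<in> (E \<inter> (?C \<times> ?C))\<^sup>*"
    using key rtrancl_sym[OF sym_restr[OF assms(2)]] by blast+
  then show "(a, b) \<in> (E \<inter> (?C \<times> ?C))\<^sup>*" by simp
qed

lemma connected_sub_comp:
  assumes "connected_in E P" "P \<subseteq> VG - W" "x \<in> P"
  shows "P \<subseteq> comp VG E W x"
proof
  fix y assume "y \<in> P"
  then have "(x, y) \<in> (E \<inter> (P \<times> P))\<^sup>*" using assms by (auto simp: connected_in_def)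
  then have "(x, y) \<in> (E \<inter> ((VG - W) \<times> (VG - W)))\<^sup>*" by (rule rtrancl_restr_mono) (use assms in auto)
  then show "y \<in> comp VG E W x" by (simp add: comp_def)
qed

lemma comp_component:
  assumes "x \<in> VG - W" "sym E"
  shows "component_of VG E W (comp VG E W x)"
  unfolding component_of_def
proof (intro conjI allI impI)
  show "comp VG E W x \<subseteq> VG - W" using comp_sub2[OF assms(1)] .
  show "connected_in E (comp VG E W x)" using comp_connected[OF assms] .
  fix C' assume "comp VG E W x \<subseteq> C' \<and> C' \<subseteq> VG - W \<and> connected_in E C'"
  then show "C' = comp VG E W x" using connected_sub_comp[of E C' VG W x] comp_self[of x VG E W] by blast
qed

lemma component_eq_comp:
  assumes "component_of VG E W C" "x \<in> C" "sym E"
  shows "C = comp VG E W x"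
proof -
  have "C \<subseteq> VG - W" "connected_in E C" using assms by (auto simp: component_of_def)
  then have 1: "C \<subseteq> comp VG E W x" using connected_sub_comp assms(2) by metis
  have "x \<in> VG - W" using assms(2) \<open>C \<subseteq> VG - W\<close> by auto
  then show ?thesis using assms(1) 1 comp_sub2[OF \<open>x \<in> VG - W\<close>] comp_connected[OF \<open>x \<in> VG - W\<close> assms(3)] unfolding component_of_def
    by blast
qed

lemma comp_edge:
  assumes "c \<in> comp VG E W x" "w \<in> VG - W" "(c, w) \<in> E" "x \<in> VG - W"
  shows "w \<in> comp VG E W x"
proof -
  have "c \<in> VG - W" using comp_sub2[OF assms(4)] assms(1) by auto
  then show ?thesis using assms by (auto simp: comp_def intro: rtrancl_into_rtrancl)
qed

lemma comp_mono:
  assumes "W' \<subseteq> W" shows "comp VG E W x \<subseteq> comp VG E W' x"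
  unfolding comp_def using assms
  by (auto elim!: rt_mono)

lemma comp_eq_if_mem:
  assumes "y \<in> comp VG E W x" "x \<in> VG - W" "sym E"
  shows "comp VG E W y = comp VG E W x"
proof -
  have "component_of VG E W (comp VG E W x)" using comp_component assms by metis
  then show ?thesis using component_eq_comp assms by metis
qed

locale setting =
  fixes VG :: "'v set" and E :: "('v \<times> 'v) set" and U :: "'v set"
    and T :: "'t set" and le :: "('t \<times> 't) set" and Vt :: "'t \<Rightarrow> 'v set"
  assumes graph: "graph VG E"
    and minorhyp: "\<forall>B F. rooted_minor VG E U B F \<and> (\<forall>b\<in>B. countable b)
               \<longrightarrow> countable_colouring_number B F"
    and nspt: "normal_semi_partition_tree VG E T le Vt"
    and slim: "slim T le Vt"
    and rooted: "U_rooted_parts T Vt U"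
    and Uparts: "U \<subseteq> parts_union Vt T"
begin

abbreviation "Fc \<equiv> contracted_graph E T Vt"
abbreviation "P \<equiv> parts_union Vt T"
definition "lt = {(a, b). (a, b) \<in> le \<and> a \<noteq> b}"

lemma symE: "sym E" and E_sub: "E \<subseteq> VG \<times> VG"
  using graph by (auto simp: graph_def)

lemma otree: "order_tree T le" using nspt by (simp add: normal_semi_partition_tree_def)

lemma le_sub: "le \<subseteq> T \<times> T" using otree by (simp add: order_tree_def)

lemma le_T: "(a, b) \<in> le \<Longrightarrow> a \<in> T \<and> b \<in> T" using le_sub by auto

lemma le_refl: "t \<in> T \<Longrightarrow> (t, t) \<in> le"
  using otree by (auto simp: order_tree_def partial_order_on_def preorder_on_def refl_on_def)

lemma le_trans: "(a, b) \<in> le \<Longrightarrow> (b, c) \<in> le \<Longrightarrow> (a, c) \<in> le"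
  using otree unfolding order_tree_def partial_order_on_def preorder_on_def trans_def by blast

lemma le_antisym: "(a, b) \<in> le \<Longrightarrow> (b, a) \<in> le \<Longrightarrow> a = b"
  using otree unfolding order_tree_def partial_order_on_def antisym_def by blast

lemma down_wo: "t \<in> T \<Longrightarrow> well_order_on (down T le t) (Restr le (down T le t))"
  using otree by (simp add: order_tree_def)

lemma down_chain:
  assumes "(a, s) \<in> le" "(b, s) \<in> le"
  shows "(a, b) \<in> le \<or> (b, a) \<in> le"
proof (cases "a = b")
  case True then show ?thesis using assms le_refl le_T by blast
next
  case False
  have s: "s \<in> T" using assms le_T by blast
  have "total_on (down T le s) (Restr le (down T le s))"
    using down_wo[OF s] by (simp add: well_order_on_def linear_order_on_def)
  moreover have "a \<in> down T le s" "b \<in> down T le s" using assms le_T by (auto simp: down_def)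
  ultimately show ?thesis using False unfolding total_on_def by blast
qed

lemma wf_lt: "wf lt"
proof (rule wfI_min)
  fix x :: 't and Q assume xQ: "x \<in> Q"
  show "\<exists>z\<in>Q. \<forall>y. (y, z) \<in> lt \<longrightarrow> y \<notin> Q"
  proof (cases "x \<in> T")
    case False
    then show ?thesis using xQ le_T by (auto simp: lt_def)
  next
    case True
    let ?D = "down T le x"
    have w: "wf (Restr le ?D - Id)" using down_wo[OF True] by (simp add: well_order_on_def)
    have x: "x \<in> Q \<inter> ?D" using xQ True le_refl by (auto simp: down_def)
    obtain z where z: "z \<in> Q \<inter> ?D" "\<And>y. (y, z) \<in> Restr le ?D - Id \<Longrightarrow> y \<notin> Q \<inter> ?D"
      by (rule wfE_min[OF w x]) blast
    have "\<forall>y. (y, z) \<in> lt \<longrightarrow> y \<notin> Q"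
    proof (intro allI impI notI)
      fix y assume y: "(y, z) \<in> lt" "y \<in> Q"
      have "(z, x) \<in> le" using z(1) by (simp add: down_def)
      then have "(y, x) \<in> le" using y le_trans by (auto simp: lt_def)
      then have "y \<in> ?D" using le_T by (simp add: down_def)
      moreover have "(y, z) \<in> Restr le ?D - Id" using y \<open>y \<in> ?D\<close> z(1) by (auto simp: lt_def)
      ultimately show False using z(2) y(2) by blast
    qed
    then show ?thesis using z(1) by blast
  qed
qed

lemma lt_min:
  assumes "x \<in> Q"
  obtains z where "z \<in> Q" "\<And>y. (y, z) \<in> le \<Longrightarrow> y \<noteq> z \<Longrightarrow> y \<notin> Q"
proof -
  obtain z where "z \<in> Q" "\<And>y. (y, z) \<in> lt \<Longrightarrow> y \<notin> Q" by (rule wfE_min[OF wf_lt assms]) blast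
  then show ?thesis using that unfolding lt_def by blast
qed

lemma root_ex: "\<exists>r0\<in>T. \<forall>t\<in>T. (r0, t) \<in> le"
proof -
  obtain r0 where r0: "r0 \<in> T" "\<forall>s\<in>T. (s, r0) \<in> le \<longrightarrow> s = r0"
    and uniq: "\<And>r. r \<in> T \<Longrightarrow> (\<forall>s\<in>T. (s, r) \<in> le \<longrightarrow> s = r) \<Longrightarrow> r = r0"
  proof -
    have "\<exists>!r. r \<in> T \<and> (\<forall>s\<in>T. (s, r) \<in> le \<longrightarrow> s = r)" using otree by (simp add: order_tree_def)
    then show ?thesis using that by (elim ex1E) blast
  qed
  have "(r0, t) \<in> le" if t: "t \<in> T" for t
  proof -
    obtain z where z: "z \<in> down T le t" "\<And>y. (y, z) \<in> le \<Longrightarrow> y \<noteq> z \<Longrightarrow> y \<notin> down T le t"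
      using lt_min[of t "down T le t"] t le_refl by (auto simp: down_def)
    have zt: "(z, t) \<in> le" "z \<in> T" using z(1) by (auto simp: down_def)
    have "\<forall>s\<in>T. (s, z) \<in> le \<longrightarrow> s = z"
    proof (intro ballI impI)
      fix s assume "s \<in> T" "(s, z) \<in> le"
      then have "s \<in> down T le t" using zt le_trans by (auto simp: down_def)
      then show "s = z" using z(2) \<open>(s, z) \<in> le\<close> by blast
    qed
    then have "z = r0" using uniq zt by blast
    then show ?thesis using zt by simp
  qed
  then show ?thesis using r0 by blast
qed

lemma parts: "t \<in> T \<Longrightarrow> Vt t \<noteq> {} \<and> Vt t \<subseteq> VG \<and> connected_in E (Vt t)"
  using nspt by (simp add: normal_semi_partition_tree_def)

lemma parts_disj0: "\<forall>s\<in>T. \<forall>t\<in>T. s \<noteq> t \<longrightarrow> Vt s \<inter> Vt t = {}"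
  using nspt by (simp add: normal_semi_partition_tree_def)

lemma parts_disj: "s \<in> T \<Longrightarrow> t \<in> T \<Longrightarrow> x \<in> Vt s \<Longrightarrow> x \<in> Vt t \<Longrightarrow> s = t"
  using parts_disj0 by blast

lemma Tgraph: "T_graph T le Fc" using nspt by (simp add: normal_semi_partition_tree_def)

lemma Fc_comp: "(s, t) \<in> Fc \<Longrightarrow> (s, t) \<in> le \<or> (t, s) \<in> le"
  using Tgraph unfolding T_graph_def comparable_def by blast

lemma Fc_sym: "(s, t) \<in> Fc \<Longrightarrow> (t, s) \<in> Fc"
  using symE unfolding contracted_graph_def by (auto dest: symD)

lemma Fc_cofinal:
  assumes "t \<in> T" "(s, t) \<in> le" "s \<noteq> t"
  shows "\<exists>u. (s, u) \<in> le \<and> (u, t) \<in> le \<and> u \<noteq> t \<and> (u, t) \<in> Fc"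
proof -
  have "s \<in> sdown T le t" using assms le_T by (auto simp: sdown_def)
  then show ?thesis using Tgraph assms(1) unfolding T_graph_def sdown_def by blast
qed

lemma Fc_edge: "s \<in> T \<Longrightarrow> t \<in> T \<Longrightarrow> s \<noteq> t \<Longrightarrow> x \<in> Vt s \<Longrightarrow> y \<in> Vt t \<Longrightarrow> (x, y) \<in> E \<Longrightarrow> (s, t) \<in> Fc"
  unfolding contracted_graph_def by blast

lemma Fc_edgeD: "(s, t) \<in> Fc \<Longrightarrow> s \<in> T \<and> t \<in> T \<and> s \<noteq> t \<and> (\<exists>x\<in>Vt s. \<exists>y\<in>Vt t. (x, y) \<in> E)"
  unfolding contracted_graph_def by blast

lemma pathcond:
  assumes "is_path VG E xs" "length xs \<ge> 2" "s \<in> T" "t \<in> T" "hd xs \<in> Vt s" "last xs \<in> Vt t"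
    "set (butlast (tl xs)) \<inter> P = {}"
    "\<forall>i. Suc i < length xs \<longrightarrow> \<not> (xs ! i \<in> P \<and> xs ! Suc i \<in> P)"
  shows "(s, t) \<in> le \<or> (t, s) \<in> le"
proof -
  have "\<forall>xs s t. is_path VG E xs \<and> length xs \<ge> 2 \<and> s \<in> T \<and> t \<in> T \<and>
        hd xs \<in> Vt s \<and> last xs \<in> Vt t \<and>
        set (butlast (tl xs)) \<inter> parts_union Vt T = {} \<and>
        (\<forall>i. Suc i < length xs \<longrightarrow>
             \<not> (xs ! i \<in> parts_union Vt T \<and> xs ! Suc i \<in> parts_union Vt T))
        \<longrightarrow> comparable le s t"
    using nspt unfolding normal_semi_partition_tree_def by (elim conjE) assumption
  then have "comparable le s t" using assms by blast
  then show ?thesis by (simp add: comparable_def)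
qed

lemma P_iff: "x \<in> P \<longleftrightarrow> (\<exists>r\<in>T. x \<in> Vt r)"
  by (auto simp: parts_union_def)

end

lemma is_path_append:
  assumes "is_path VG E xs" "x' \<in> VG" "x' \<notin> set xs" "(last xs, x') \<in> E"
  shows "is_path VG E (xs @ [x'])"
  unfolding is_path_def
proof (intro conjI allI impI)
  have ne: "xs \<noteq> []" using assms(1) by (simp add: is_path_def)
  show "xs @ [x'] \<noteq> []" by simp
  show "distinct (xs @ [x'])" using assms by (simp add: is_path_def)
  show "set (xs @ [x']) \<subseteq> VG" using assms by (simp add: is_path_def)
  fix i assume i: "Suc i < length (xs @ [x'])"
  show "((xs @ [x']) ! i, (xs @ [x']) ! Suc i) \<in> E"
  proof (cases "Suc i < length xs")
    case True
    then show ?thesis using assms(1) by (simp add: is_path_def nth_append)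
  next
    case False
    then have si: "Suc i = length xs" using i by simp
    then have ii: "i = length xs - 1" by simp
    have "(xs @ [x']) ! i = last xs" using ne ii by (simp add: nth_append last_conv_nth)
    moreover have "(xs @ [x']) ! Suc i = x'" using si by (simp add: nth_append)
    ultimately have "(xs @ [x']) ! i = last xs" "(xs @ [x']) ! Suc i = x'" by blast+
    then show ?thesis using assms(4) by simp
  qed
qed

lemma is_path_take:
  assumes "is_path VG E xs" "0 < k"
  shows "is_path VG E (take k xs)"
  using assms unfolding is_path_def
  by (auto dest: in_set_takeD simp: distinct_take)

lemma is_path_pair:
  assumes "x \<noteq> x'" "x \<in> VG" "x' \<in> VG" "(x, x') \<in> E"
  shows "is_path VG E [x, x']"
  using assms unfolding is_path_def by (auto simp: less_Suc_eq)

context setting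
begin

lemma up_step:
  assumes "(t, r) \<in> le" "(r, r') \<in> le \<or> (r', r) \<in> le" "x' \<in> Vt r'"
    "x' \<notin> parts_union Vt (sdown T le t)"
  shows "(t, r') \<in> le"
  using assms(2)
proof
  assume "(r, r') \<in> le" then show ?thesis using assms(1) le_trans by blast
next
  assume rr: "(r', r) \<in> le"
  then have "(t, r') \<in> le \<or> (r', t) \<in> le" using down_chain assms(1) by blast
  then show ?thesis
  proof
    assume "(r', t) \<in> le"
    show ?thesis
    proof (cases "r' = t")
      case True then show ?thesis using assms(1) le_T le_refl by blast
    next
      case False
      then have "r' \<in> sdown T le t" using \<open>(r', t) \<in> le\<close> le_T by (auto simp: sdown_def)
      then have "x' \<in> parts_union Vt (sdown T le t)" using assms(3) by (auto simp: parts_union_def)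
      then show ?thesis using assms(4) by blast
    qed
  qed
qed

lemma compP:
  assumes t: "t \<in> T" and x0: "x0 \<in> Vt t" and W: "W = parts_union Vt (sdown T le t)"
    and x: "x \<in> comp VG E W x0"
  shows "(\<forall>r\<in>T. x \<in> Vt r \<longrightarrow> (t, r) \<in> le) \<and>
         (x \<notin> P \<longrightarrow> (\<exists>xs r. is_path VG E xs \<and> r \<in> T \<and> (t, r) \<in> le \<and> hd xs \<in> Vt r \<and>
              last xs = x \<and> set (tl xs) \<inter> P = {}))"
proof -
  let ?R = "E \<inter> ((VG - W) \<times> (VG - W))"
  have "(x0, x) \<in> ?R\<^sup>*" using x by (simp add: comp_def)
  then show ?thesis
  proof induct
    case base
    have "x0 \<in> P" using x0 t by (auto simp: parts_union_def)
    then show ?case using parts_disj t x0 le_refl by blast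
  next
    case (step x x')
    have xx': "(x, x') \<in> E" "x \<in> VG - W" "x' \<in> VG - W" using step(2) by auto
    have x'W: "x' \<notin> parts_union Vt (sdown T le t)" using xx'(3) W by simp
    show ?case
    proof (cases "x' \<in> P")
      case True
      then obtain r' where r': "r' \<in> T" "x' \<in> Vt r'" by (auto simp: parts_union_def)
      have tr': "(t, r') \<in> le"
      proof (cases "x \<in> P")
        case True
        then obtain r where r: "r \<in> T" "x \<in> Vt r" by (auto simp: parts_union_def)
        have tr: "(t, r) \<in> le" using conjunct1[OF step(3)] r by blast
        show ?thesis
        proof (cases "r = r'")
          case True then show ?thesis using tr by simp
        next
          case False
          then have "(r, r') \<in> Fc" using Fc_edge r r' xx'(1) by blast
          then show ?thesis using up_step[OF tr Fc_comp r'(2) x'W] by blast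
        qed
      next
        case False
        then obtain xs r where xs: "is_path VG E xs" "r \<in> T" "(t, r) \<in> le" "hd xs \<in> Vt r"
          "last xs = x" "set (tl xs) \<inter> P = {}" using mp[OF conjunct2[OF step(3)]] by blast
        have ne: "xs \<noteq> []" using xs(1) by (simp add: is_path_def)
        show ?thesis
        proof (cases "x' \<in> set xs")
          case True
          then have "x' = hd xs" using xs(6) \<open>x' \<in> P\<close> ne by (cases xs) auto
          then have "r = r'" using parts_disj xs r' by metis
          then show ?thesis using xs by simp
        next
          case False
          let ?ys = "xs @ [x']"
          have yp: "is_path VG E ?ys" using is_path_append[OF xs(1) _ False] xx' xs(5) by blast
          have "(r, r') \<in> le \<or> (r', r) \<in> le"
          proof (rule pathcond[OF yp _ xs(2) r'(1)])
            show "2 \<le> length ?ys" using ne by (cases xs) auto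
            show "hd ?ys \<in> Vt r" using xs(4) ne by simp
            show "last ?ys \<in> Vt r'" using r' by simp
            have "butlast (tl ?ys) = tl xs" using ne by (cases xs) auto
            then show "set (butlast (tl ?ys)) \<inter> P = {}" using xs(6) by simp
            show "\<forall>i. Suc i < length ?ys \<longrightarrow> \<not> (?ys ! i \<in> P \<and> ?ys ! Suc i \<in> P)"
            proof (intro allI impI)
              fix i assume i: "Suc i < length ?ys"
              show "\<not> (?ys ! i \<in> P \<and> ?ys ! Suc i \<in> P)"
              proof (cases "Suc i < length xs")
                case True
                then have "?ys ! Suc i = xs ! Suc i" by (simp add: nth_append)
                moreover have "xs ! Suc i \<in> set (tl xs)" using True ne
                  by (cases xs) auto
                ultimately show ?thesis using xs(6) by auto
              next
                case False
                then have "i = length xs - 1" using i by simp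
                then have "?ys ! i = last xs" using ne by (simp add: nth_append last_conv_nth)
                then show ?thesis using xs(5) \<open>x \<notin> P\<close> by simp
              qed
            qed
          qed
          then show ?thesis using up_step[OF xs(3) _ r'(2) x'W] by blast
        qed
      qed
      then show ?thesis using True r' parts_disj by blast
    next
      case False
      have part2: "\<exists>xs r. is_path VG E xs \<and> r \<in> T \<and> (t, r) \<in> le \<and> hd xs \<in> Vt r \<and>
              last xs = x' \<and> set (tl xs) \<inter> P = {}"
      proof (cases "x \<in> P")
        case True
        then obtain r where r: "r \<in> T" "x \<in> Vt r" by (auto simp: parts_union_def)
        have tr: "(t, r) \<in> le" using conjunct1[OF step(3)] r by blast
        have "x \<noteq> x'" using True False by metis
        then have "is_path VG E [x, x']" by (rule is_path_pair) (use xx' in auto)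
        moreover have "set (tl [x, x']) \<inter> P = {}" using False by simp
        moreover have "hd [x, x'] \<in> Vt r" "last [x, x'] = x'" using r by simp_all
        ultimately show ?thesis using r tr by blast
      next
        case xnP: False
        then obtain xs r where xs: "is_path VG E xs" "r \<in> T" "(t, r) \<in> le" "hd xs \<in> Vt r"
          "last xs = x" "set (tl xs) \<inter> P = {}" using mp[OF conjunct2[OF step(3)]] by blast
        have ne: "xs \<noteq> []" using xs(1) by (simp add: is_path_def)
        show ?thesis
        proof (cases "x' \<in> set xs")
          case True
          then obtain k where k: "k < length xs" "xs ! k = x'" by (metis in_set_conv_nth)
          have k0: "k \<noteq> 0" using k xs(4) xs(2) False ne
            by (metis hd_conv_nth parts_union_def UN_I)
          let ?ys = "take (Suc k) xs"
          have "is_path VG E ?ys" using is_path_take[OF xs(1)] by simp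
          moreover have "hd ?ys = hd xs" using ne by simp
          moreover have "last ?ys = x'" using k by (simp add: take_Suc_conv_app_nth)
          moreover have "set (tl ?ys) \<subseteq> set (tl xs)"
            by (metis set_take_subset take_tl tl_take)
          ultimately have "is_path VG E ?ys \<and> r \<in> T \<and> (t, r) \<in> le \<and> hd ?ys \<in> Vt r \<and> last ?ys = x' \<and> set (tl ?ys) \<inter> P = {}"
            using xs(2,3,4,6) by auto
          then show ?thesis by blast
        next
          case False
          have "is_path VG E (xs @ [x'])" using is_path_append[OF xs(1) _ False] xx' xs(5) by blast
          moreover have "set (tl (xs @ [x'])) = set (tl xs) \<union> {x'}" using ne by (cases xs) auto
          ultimately have "is_path VG E (xs @ [x']) \<and> r \<in> T \<and> (t, r) \<in> le \<and> hd (xs @ [x']) \<in> Vt r \<and> last (xs @ [x']) = x' \<and> set (tl (xs @ [x'])) \<inter> P = {}"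
            using xs(2,3,4,6) ne \<open>x' \<notin> P\<close> by auto
          then show ?thesis by blast
        qed
      qed
      have "\<forall>r\<in>T. x' \<in> Vt r \<longrightarrow> (t, r) \<in> le" using False by (auto simp: parts_union_def)
      then show ?thesis using part2 by blast
    qed
  qed
qed

lemma compP_le:
  assumes "t \<in> T" "x0 \<in> Vt t" "x \<in> comp VG E (parts_union Vt (sdown T le t)) x0" "r \<in> T" "x \<in> Vt r"
  shows "(t, r) \<in> le"
  using compP[OF assms(1,2) refl assms(3)] assms(4,5) by blast

end

context setting
begin

definition "Pint t q = parts_union Vt {r\<in>T. (t, r) \<in> le \<and> (r, q) \<in> le}"

lemma Pint_mono: "(q', q) \<in> le \<Longrightarrow> Pint t q' \<subseteq> Pint t q"
  unfolding Pint_def parts_union_def using le_trans by blast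

lemma Vt_sub_Pint: "(t, q) \<in> le \<Longrightarrow> Vt q \<subseteq> Pint t q"
  unfolding Pint_def parts_union_def using le_T le_refl by blast

lemma Vt_sub_Pint2: "(t, q) \<in> le \<Longrightarrow> Vt t \<subseteq> Pint t q"
  unfolding Pint_def parts_union_def using le_T le_refl by blast

lemma conn_up:
  assumes "(t, q) \<in> le"
  shows "\<forall>x\<in>Vt q. \<forall>y\<in>Vt t. (y, x) \<in> (E \<inter> (Pint t q \<times> Pint t q))\<^sup>*"
  using assms
proof (induct q rule: wf_induct[OF wf_lt])
  case (1 q)
  have qT: "q \<in> T" "t \<in> T" using 1(2) le_T by auto
  show ?case
  proof (intro ballI)
    fix x y assume x: "x \<in> Vt q" and y: "y \<in> Vt t"
    show "(y, x) \<in> (E \<inter> (Pint t q \<times> Pint t q))\<^sup>*"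
    proof (cases "q = t")
      case True
      have "(y, x) \<in> (E \<inter> (Vt t \<times> Vt t))\<^sup>*" using parts[OF qT(2)] x y True
        by (auto simp: connected_in_def)
      then show ?thesis by (rule rtrancl_restr_mono) (use Vt_sub_Pint2[OF 1(2)] in blast)
    next
      case False
      obtain u where u: "(t, u) \<in> le" "(u, q) \<in> le" "u \<noteq> q" "(u, q) \<in> Fc"
        using Fc_cofinal[OF qT(1) 1(2) False[symmetric]] by blast
      obtain a b where ab: "a \<in> Vt u" "b \<in> Vt q" "(a, b) \<in> E" using Fc_edgeD[OF u(4)] by blast
      have "(u, q) \<in> lt" using u by (simp add: lt_def)
      then have "\<forall>x\<in>Vt u. \<forall>y\<in>Vt t. (y, x) \<in> (E \<inter> (Pint t u \<times> Pint t u))\<^sup>*" using 1(1) u(1) by blast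
      then have "(y, a) \<in> (E \<inter> (Pint t u \<times> Pint t u))\<^sup>*" using ab y by blast
      then have s1: "(y, a) \<in> (E \<inter> (Pint t q \<times> Pint t q))\<^sup>*"
        by (rule rtrancl_restr_mono) (use Pint_mono[OF u(2)] in blast)
      have "a \<in> Pint t q" using Vt_sub_Pint[OF u(1)] Pint_mono[OF u(2)] ab by blast
      moreover have "b \<in> Pint t q" using Vt_sub_Pint[OF 1(2)] ab by blast
      ultimately have s2: "(a, b) \<in> E \<inter> (Pint t q \<times> Pint t q)" using ab by blast
      have "(b, x) \<in> (E \<inter> (Vt q \<times> Vt q))\<^sup>*" using parts[OF qT(1)] x ab
        by (auto simp: connected_in_def)
      then have s3: "(b, x) \<in> (E \<inter> (Pint t q \<times> Pint t q))\<^sup>*"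
        by (rule rtrancl_restr_mono) (use Vt_sub_Pint[OF 1(2)] in blast)
      from s1 s2 s3 show ?thesis by (meson rtrancl_into_rtrancl rtrancl_trans)
    qed
  qed
qed

lemma Pint_sub: "Pint t q \<subseteq> VG"
  unfolding Pint_def parts_union_def using parts by blast

lemma Vt_inj: "a \<in> T \<Longrightarrow> b \<in> T \<Longrightarrow> Vt a = Vt b \<Longrightarrow> a = b"
  using parts parts_disj by blast

lemma parts_countable:
  assumes "t \<in> T" "countable (sdown T le t)"
  shows "countable (Vt t)"
proof -
  have "Vt t \<lesssim> (sdown T le t <+> (UNIV :: nat set))" using slim assms(1) by (simp add: slim_def)
  moreover have "countable (sdown T le t <+> (UNIV :: nat set))" using assms(2) by simp
  ultimately show ?thesis using countable_lepoll by blast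
qed

lemma minor_order:
  assumes S: "S \<subseteq> T" and cS: "\<forall>t\<in>S. countable (Vt t)"
  shows "\<exists>prec. (\<forall>x\<in>S. finite {y\<in>S. (y, x) \<in> prec \<and> y \<noteq> x \<and> (y, x) \<in> Fc}) \<and>
           (\<forall>x\<in>S. \<forall>y\<in>S. x \<noteq> y \<longrightarrow> (x, y) \<in> prec \<or> (y, x) \<in> prec)"
proof -
  define B where "B = Vt ` S"
  define F where "F = {(Vt a, Vt b) | a b. a \<in> S \<and> b \<in> S \<and> (a, b) \<in> Fc}"
  have inj: "inj_on Vt S" using Vt_inj S by (meson inj_onI subsetD)
  have mb: "minor_by_branch_sets VG E B F"
    unfolding minor_by_branch_sets_def
  proof (intro conjI)
    show "\<forall>b\<in>B. b \<subseteq> VG \<and> connected_in E b" using parts S by (auto simp: B_def)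
    show "pairwise disjnt B"
    proof (unfold pairwise_def disjnt_def B_def, intro ballI impI)
      fix X Y assume "X \<in> Vt ` S" "Y \<in> Vt ` S" "X \<noteq> Y"
      then obtain a b where "a \<in> S" "b \<in> S" "X = Vt a" "Y = Vt b" "a \<noteq> b" by blast
      then show "X \<inter> Y = {}" using S parts_disj0 by blast
    qed
    show "graph B F"
      unfolding graph_def
    proof (intro conjI)
      show "F \<subseteq> B \<times> B" by (auto simp: F_def B_def)
      show "sym F" unfolding sym_def F_def using Fc_sym by blast
      show "irrefl F" unfolding irrefl_def F_def
        using Fc_edgeD Vt_inj by blast
    qed
    show "\<forall>(a, b)\<in>F. \<exists>x\<in>a. \<exists>y\<in>b. (x, y) \<in> E"
      unfolding F_def using Fc_edgeD by blast
  qed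
  have "rooted_minor VG E U B F"
    using mb rooted S unfolding rooted_minor_def U_rooted_parts_def B_def by blast
  moreover have "\<forall>b\<in>B. countable b" using cS by (auto simp: B_def)
  ultimately have "countable_colouring_number B F" using minorhyp by blast
  then obtain r where r: "well_order_on B r"
    "\<forall>x\<in>B. finite {y\<in>B. (y, x) \<in> r \<and> y \<noteq> x \<and> (y, x) \<in> F}"
    unfolding countable_colouring_number_def by blast
  define prec where "prec = {(a, b). (Vt a, Vt b) \<in> r}"
  have "finite {y\<in>S. (y, x) \<in> prec \<and> y \<noteq> x \<and> (y, x) \<in> Fc}" if x: "x \<in> S" for x
  proof -
    have "Vt ` {y\<in>S. (y, x) \<in> prec \<and> y \<noteq> x \<and> (y, x) \<in> Fc}
          \<subseteq> {y\<in>B. (y, Vt x) \<in> r \<and> y \<noteq> Vt x \<and> (y, Vt x) \<in> F}"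
      using x S Vt_inj unfolding B_def F_def prec_def by blast
    then have "finite (Vt ` {y\<in>S. (y, x) \<in> prec \<and> y \<noteq> x \<and> (y, x) \<in> Fc})"
    proof (rule finite_subset)
      show "finite {y\<in>B. (y, Vt x) \<in> r \<and> y \<noteq> Vt x \<and> (y, Vt x) \<in> F}" using r(2) x by (simp add: B_def)
    qed
    moreover have "inj_on Vt {y\<in>S. (y, x) \<in> prec \<and> y \<noteq> x \<and> (y, x) \<in> Fc}"
      by (rule inj_on_subset[OF inj]) blast
    ultimately show ?thesis by (rule finite_imageD)
  qed
  moreover have "(x, y) \<in> prec \<or> (y, x) \<in> prec" if "x \<in> S" "y \<in> S" "x \<noteq> y" for x y
  proof -
    have "total_on B r" using r(1) by (simp add: well_order_on_def linear_order_on_def)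
    moreover have "Vt x \<noteq> Vt y" using that S Vt_inj by blast
    moreover have "Vt x \<in> B" "Vt y \<in> B" using that by (auto simp: B_def)
    ultimately have "(Vt x, Vt y) \<in> r \<or> (Vt y, Vt x) \<in> r" unfolding total_on_def by blast
    then show ?thesis unfolding prec_def by blast
  qed
  ultimately show ?thesis by blast
qed

end

context setting
begin

lemma finite_chain_max:
  assumes "finite N" "N \<noteq> {}" "\<forall>n\<in>N. (n, d) \<in> le"
  shows "\<exists>m\<in>N. \<forall>n\<in>N. (n, m) \<in> le"
  using assms
proof (induct N rule: finite_ne_induct)
  case (singleton x)
  then show ?case using le_T le_refl by blast
next
  case (insert x N)
  then obtain m where m: "m \<in> N" "\<forall>n\<in>N. (n, m) \<in> le" by blast
  have "(x, m) \<in> le \<or> (m, x) \<in> le" using down_chain insert m by blast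
  then show ?case
  proof
    assume "(x, m) \<in> le" then show ?thesis using m by blast
  next
    assume "(m, x) \<in> le"
    then have "\<forall>n\<in>insert x N. (n, x) \<in> le" using m le_trans le_refl insert(4) le_T by blast
    then show ?thesis by blast
  qed
qed

lemma limit_nbrs:
  assumes d: "d \<in> T" and I: "I = sdown T le d" and ne: "I \<noteq> {}"
    and nomax: "\<forall>i\<in>I. \<exists>j\<in>I. (i, j) \<in> le \<and> i \<noteq> j"
  shows "infinite {u\<in>I. (u, d) \<in> Fc}"
proof
  assume fin: "finite {u\<in>I. (u, d) \<in> Fc}"
  let ?N = "{u\<in>I. (u, d) \<in> Fc}"
  obtain i where i: "i \<in> I" using ne by blast
  then have "(i, d) \<in> le" "i \<noteq> d" using I by (auto simp: sdown_def)
  then obtain u where u: "(i, u) \<in> le" "(u, d) \<in> le" "u \<noteq> d" "(u, d) \<in> Fc"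
    using Fc_cofinal[OF d] by blast
  have "u \<in> ?N" using u I le_T by (auto simp: sdown_def)
  then have "?N \<noteq> {}" by blast
  moreover have "\<forall>n\<in>?N. (n, d) \<in> le" using I by (auto simp: sdown_def)
  ultimately obtain m where m: "m \<in> ?N" "\<forall>n\<in>?N. (n, m) \<in> le" using finite_chain_max[OF fin] by blast
  then obtain j where j: "j \<in> I" "(m, j) \<in> le" "m \<noteq> j" using nomax by blast
  then have "(j, d) \<in> le" "j \<noteq> d" using I by (auto simp: sdown_def)
  then obtain u' where u': "(j, u') \<in> le" "(u', d) \<in> le" "u' \<noteq> d" "(u', d) \<in> Fc"
    using Fc_cofinal[OF d] by blast
  have "u' \<in> ?N" using u' I le_T by (auto simp: sdown_def)
  then have "(u', m) \<in> le" using m by blast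
  then have "(j, m) \<in> le" using u'(1) le_trans by blast
  then show False using j le_antisym by blast
qed

lemma exists_not_in_finite:
  assumes "infinite A" "finite B" shows "\<exists>x\<in>A. x \<notin> B"
proof (rule ccontr)
  assume "\<not> (\<exists>x\<in>A. x \<notin> B)"
  then have "A \<subseteq> B" by blast
  then show False using assms finite_subset by auto
qed

lemma all_countable:
  assumes t0: "t0 \<in> T"
  shows "countable (down T le t0)"
proof (rule ccontr)
  assume nc: "\<not> countable (down T le t0)"
  define Tc where "Tc = {t\<in>T. countable (down T le t)}"
  obtain t where t: "t \<in> T - Tc" and tmin: "\<And>y. (y, t) \<in> le \<Longrightarrow> y \<noteq> t \<Longrightarrow> y \<notin> T - Tc"
    using lt_min[of t0 "T - Tc"] t0 nc Tc_def by blast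
  define K where "K = sdown T le t"
  have tT: "t \<in> T" using t by blast
  have KTc: "K \<subseteq> Tc" using tmin le_T by (auto simp: K_def sdown_def)
  have KT: "K \<subseteq> T" using KTc Tc_def by blast
  have downK: "down T le t = insert t K" using tT le_refl by (auto simp: K_def sdown_def down_def)
  have Kunc: "\<not> countable K" using t downK Tc_def by auto
  have Kle: "\<And>k. k \<in> K \<Longrightarrow> (k, t) \<in> le \<and> k \<noteq> t" by (auto simp: K_def sdown_def)
  have Kdown: "\<And>k s. k \<in> K \<Longrightarrow> (s, k) \<in> le \<Longrightarrow> s \<in> K"
  proof -
    fix k s assume k: "k \<in> K" "(s, k) \<in> le"
    have "(s, t) \<in> le" using Kle[OF k(1)] k(2) le_trans by blast
    moreover have "s \<noteq> t" using Kle[OF k(1)] k(2) le_antisym by blast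
    ultimately show "s \<in> K" using le_T by (auto simp: K_def sdown_def)
  qed
  have Kchain: "\<And>a b. a \<in> K \<Longrightarrow> b \<in> K \<Longrightarrow> (a, b) \<in> le \<or> (b, a) \<in> le"
    using Kle down_chain by blast
  have cTc: "\<forall>s\<in>Tc. countable (Vt s)"
  proof
    fix s assume "s \<in> Tc"
    then have "s \<in> T" "countable (down T le s)" by (auto simp: Tc_def)
    moreover have "sdown T le s \<subseteq> down T le s" by (auto simp: sdown_def down_def)
    ultimately show "countable (Vt s)" using parts_countable[of s] countable_subset[of "sdown T le s" "down T le s"] by blast
  qed
  have TcT: "Tc \<subseteq> T" by (auto simp: Tc_def)
  obtain prec where prec1: "\<forall>x\<in>Tc. finite {y\<in>Tc. (y, x) \<in> prec \<and> y \<noteq> x \<and> (y, x) \<in> Fc}"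
    and prec2: "\<forall>x\<in>Tc. \<forall>y\<in>Tc. x \<noteq> y \<longrightarrow> (x, y) \<in> prec \<or> (y, x) \<in> prec"
    using minor_order[OF TcT cTc] by (elim exE conjE)
  define f where "f b = {y\<in>Tc. (y, b) \<in> prec \<and> y \<noteq> b \<and> (y, b) \<in> Fc}" for b
  define dc where "dc J = (\<Union>j\<in>J. down T le j)" for J
  define mn where "mn J = (SOME m. m \<in> K - J \<and> (\<forall>y. (y, m) \<in> le \<and> y \<noteq> m \<longrightarrow> y \<notin> K - J))" for J
  define stp where "stp J = dc (J \<union> (\<Union>(f ` J) \<inter> K) \<union> {mn J})" for J
  define I where "I n = (stp ^^ n) {}" for n
  have I0: "I 0 = {}" by (simp add: I_def)
  have IS: "I (Suc n) = stp (I n)" for n by (simp add: I_def)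
  have mn: "mn J \<in> K - J \<and> (\<forall>y. (y, mn J) \<in> le \<and> y \<noteq> mn J \<longrightarrow> y \<notin> K - J)" if "countable J" for J
  proof -
    have "K - J \<noteq> {}" using Kunc that countable_subset by (metis Diff_eq_empty_iff)
    then obtain x where "x \<in> K - J" by blast
    then obtain z where "z \<in> K - J" "\<And>y. (y, z) \<in> le \<Longrightarrow> y \<noteq> z \<Longrightarrow> y \<notin> K - J" by (rule lt_min) blast+
    then have "\<exists>m. m \<in> K - J \<and> (\<forall>y. (y, m) \<in> le \<and> y \<noteq> m \<longrightarrow> y \<notin> K - J)" by blast
    then show ?thesis unfolding mn_def by (rule someI_ex)
  qed
  have dcK: "dc J \<subseteq> K" if "J \<subseteq> K" for J
    using that Kdown by (auto simp: dc_def down_def)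
  have dcc: "countable (dc J)" if "J \<subseteq> K" "countable J" for J
  proof -
    have "\<forall>j\<in>J. countable (down T le j)" using that KTc by (auto simp: Tc_def)
    then show ?thesis unfolding dc_def using that(2) by blast
  qed
  have dcsup: "J \<subseteq> dc J" if "J \<subseteq> T" for J
    using that le_refl by (auto simp: dc_def down_def)
  have dcdown: "\<And>i s. i \<in> dc J \<Longrightarrow> (s, i) \<in> le \<Longrightarrow> s \<in> dc J" for J
    using le_trans le_T by (auto simp: dc_def down_def)
  have inv: "I n \<subseteq> K \<and> countable (I n)" for n
  proof (induct n)
    case 0 then show ?case by (simp add: I0)
  next
    case (Suc n)
    let ?J = "I n \<union> (\<Union>(f ` I n) \<inter> K) \<union> {mn (I n)}"
    have "mn (I n) \<in> K" using mn[of "I n"] Suc by blast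
    then have JK: "?J \<subseteq> K" using Suc by blast
    have "\<forall>b\<in>I n. finite (f b)" using prec1 Suc KTc by (auto simp: f_def)
    then have "countable (\<Union>(f ` I n))" using Suc by (blast intro: countable_finite)
    then have "countable ?J" using Suc by blast
    then show ?case using IS dcK[OF JK] dcc[OF JK] by (simp add: stp_def)
  qed
  have Idown: "\<And>i s. i \<in> I n \<Longrightarrow> (s, i) \<in> le \<Longrightarrow> s \<in> I n" for n
  proof (cases n)
    case 0 then show "\<And>i s. i \<in> I n \<Longrightarrow> (s, i) \<in> le \<Longrightarrow> s \<in> I n" by (simp add: I0)
  next
    case (Suc m)
    then show "\<And>i s. i \<in> I n \<Longrightarrow> (s, i) \<in> le \<Longrightarrow> s \<in> I n" using dcdown by (simp add: IS stp_def)
  qed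
  have Jsub: "I n \<union> (\<Union>(f ` I n) \<inter> K) \<union> {mn (I n)} \<subseteq> I (Suc n)" for n
  proof -
    have "mn (I n) \<in> K" using mn[of "I n"] inv[of n] by blast
    then have "I n \<union> (\<Union>(f ` I n) \<inter> K) \<union> {mn (I n)} \<subseteq> K" using inv[of n] by blast
    then have "I n \<union> (\<Union>(f ` I n) \<inter> K) \<union> {mn (I n)} \<subseteq> T" using KT by blast
    then show ?thesis unfolding IS stp_def by (rule dcsup)
  qed
  define Iw where "Iw = (\<Union>n. I n)"
  have IwK: "Iw \<subseteq> K" using inv by (auto simp: Iw_def)
  have cIw: "countable Iw" using inv by (auto simp: Iw_def)
  have "K - Iw \<noteq> {}" using Kunc cIw countable_subset by (metis Diff_eq_empty_iff)
  then obtain x where "x \<in> K - Iw" by blast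
  then obtain d where d: "d \<in> K - Iw" and dmin: "\<And>y. (y, d) \<in> le \<Longrightarrow> y \<noteq> d \<Longrightarrow> y \<notin> K - Iw"
    by (rule lt_min) blast+
  have dT: "d \<in> T" "d \<in> Tc" using d KT KTc by auto
  have sd: "sdown T le d = Iw"
  proof
    show "sdown T le d \<subseteq> Iw"
    proof
      fix s assume "s \<in> sdown T le d"
      then have "(s, d) \<in> le" "s \<noteq> d" by (auto simp: sdown_def)
      moreover have "s \<in> K" using Kdown d \<open>(s, d) \<in> le\<close> by blast
      ultimately show "s \<in> Iw" using dmin by blast
    qed
    show "Iw \<subseteq> sdown T le d"
    proof
      fix i assume i: "i \<in> Iw"
      then obtain n where n: "i \<in> I n" by (auto simp: Iw_def)
      have "(i, d) \<in> le \<or> (d, i) \<in> le" using Kchain IwK i d by blast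
      moreover have "(d, i) \<notin> le"
      proof
        assume "(d, i) \<in> le"
        then have "d \<in> I n" using Idown n by blast
        then show False using d by (auto simp: Iw_def)
      qed
      ultimately have "(i, d) \<in> le" by blast
      moreover have "i \<noteq> d" using i d by blast
      ultimately show "i \<in> sdown T le d" using le_T by (auto simp: sdown_def)
    qed
  qed
  have Iwne: "Iw \<noteq> {}"
  proof -
    have "mn (I 0) \<in> I 1" using Jsub[of 0] by auto
    then show ?thesis by (auto simp: Iw_def)
  qed
  have nomax: "\<forall>i\<in>Iw. \<exists>j\<in>Iw. (i, j) \<in> le \<and> i \<noteq> j"
  proof
    fix i assume i: "i \<in> Iw"
    then obtain n where n: "i \<in> I n" by (auto simp: Iw_def)
    let ?m = "mn (I n)"
    have m: "?m \<in> K - I n" using mn[of "I n"] inv[of n] by blast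
    have mI: "?m \<in> I (Suc n)" using Jsub by blast
    have "(i, ?m) \<in> le \<or> (?m, i) \<in> le" using Kchain m inv n by blast
    moreover have "(?m, i) \<notin> le" using Idown n m by blast
    ultimately have "(i, ?m) \<in> le" by blast
    moreover have "i \<noteq> ?m" using m n by blast
    moreover have "?m \<in> Iw" using mI by (auto simp: Iw_def)
    ultimately show "\<exists>j\<in>Iw. (i, j) \<in> le \<and> i \<noteq> j" by blast
  qed
  have inf: "infinite {u\<in>Iw. (u, d) \<in> Fc}"
    using limit_nbrs[OF dT(1) sd[symmetric] Iwne nomax] .
  have fin: "finite {y\<in>Tc. (y, d) \<in> prec \<and> y \<noteq> d \<and> (y, d) \<in> Fc}" using prec1 dT by blast
  obtain b where b: "b \<in> {u\<in>Iw. (u, d) \<in> Fc}" "b \<notin> {y\<in>Tc. (y, d) \<in> prec \<and> y \<noteq> d \<and> (y, d) \<in> Fc}"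
    using exists_not_in_finite[OF inf fin] by blast
  have bTc: "b \<in> Tc" using b IwK KTc by blast
  have bd: "b \<noteq> d" using b d by blast
  have "(b, d) \<notin> prec" using b bTc bd by blast
  then have "(d, b) \<in> prec" using prec2 bTc dT bd by blast
  moreover have "(d, b) \<in> Fc" using b Fc_sym by blast
  ultimately have "d \<in> f b" using dT bd by (auto simp: f_def)
  moreover obtain n where "b \<in> I n" using b by (auto simp: Iw_def)
  ultimately have "d \<in> I (Suc n)" using Jsub[of n] d by blast
  then show False using d by (auto simp: Iw_def)
qed

end

primrec pickl :: "(nat \<Rightarrow> 'a set) \<Rightarrow> nat \<Rightarrow> 'a list" where
  "pickl Opt 0 = []"
| "pickl Opt (Suc n) = pickl Opt n @ [SOME t. t \<in> Opt n \<and> t \<notin> set (pickl Opt n)]"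

lemma pickl_props:
  assumes "\<forall>n. infinite (Opt n)"
  shows "length (pickl Opt n) = n \<and> distinct (pickl Opt n) \<and> (\<forall>i<n. pickl Opt n ! i \<in> Opt i)"
proof (induct n)
  case 0 then show ?case by simp
next
  case (Suc n)
  have "infinite (Opt n - set (pickl Opt n))"
    by (rule Diff_infinite_finite) (use assms in simp_all)
  then obtain t where "t \<in> Opt n - set (pickl Opt n)" using infinite_imp_nonempty by blast
  then have "\<exists>t. t \<in> Opt n \<and> t \<notin> set (pickl Opt n)" by blast
  then have s: "(SOME t. t \<in> Opt n \<and> t \<notin> set (pickl Opt n)) \<in> Opt n \<and>
               (SOME t. t \<in> Opt n \<and> t \<notin> set (pickl Opt n)) \<notin> set (pickl Opt n)"
    by (rule someI_ex)
  show ?case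
  proof (intro conjI allI impI)
    show "length (pickl Opt (Suc n)) = Suc n" using Suc by simp
    show "distinct (pickl Opt (Suc n))" using Suc s by simp
    fix i assume i: "i < Suc n"
    show "pickl Opt (Suc n) ! i \<in> Opt i"
    proof (cases "i < n")
      case True then show ?thesis using Suc by (simp add: nth_append)
    next
      case False then have "i = n" using i by simp
      then show ?thesis using Suc s by (simp add: nth_append)
    qed
  qed
qed

lemma pickl_prefix:
  assumes "\<forall>n. infinite (Opt n)" "i < n"
  shows "pickl Opt n ! i = pickl Opt (Suc i) ! i"
  using assms(2)
proof (induct n)
  case 0 then show ?case by simp
next
  case (Suc n)
  show ?case
  proof (cases "i < n")
    case True
    then have "pickl Opt (Suc n) ! i = pickl Opt n ! i"
      using pickl_props[OF assms(1), of n] by (simp add: nth_append)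
    then show ?thesis using Suc True by simp
  next
    case False then have "i = n" using Suc by simp
    then show ?thesis by simp
  qed
qed

lemma pick_seq:
  fixes Opt :: "nat \<Rightarrow> 'a set"
  assumes "\<forall>n. infinite (Opt n)"
  shows "\<exists>g. inj g \<and> (\<forall>n. g n \<in> Opt n)"
proof -
  define g where "g n = pickl Opt (Suc n) ! n" for n
  have mem: "g n \<in> Opt n" for n using pickl_props[OF assms, of "Suc n"] by (simp add: g_def)
  have "g m \<noteq> g n" if "m < n" for m n
  proof -
    have "g m = pickl Opt (Suc n) ! m" using pickl_prefix[OF assms, of m "Suc n"] that by (simp add: g_def)
    moreover have "g n = pickl Opt (Suc n) ! n" by (simp add: g_def)
    moreover have "distinct (pickl Opt (Suc n))" "length (pickl Opt (Suc n)) = Suc n"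
      using pickl_props[OF assms, of "Suc n"] by auto
    ultimately show ?thesis using that by (simp add: nth_eq_iff_index_eq)
  qed
  then have "inj g" by (metis inj_onI linorder_neqE_nat)
  then show ?thesis using mem by blast
qed

lemma uncountable_fiber:
  fixes h :: "'a \<Rightarrow> nat"
  assumes "uncountable Z"
  shows "\<exists>n. infinite {z\<in>Z. h z = n}"
proof (rule ccontr)
  assume "\<not> (\<exists>n. infinite {z\<in>Z. h z = n})"
  then have "\<forall>n. countable {z\<in>Z. h z = n}" by (simp add: countable_finite)
  then have "countable (\<Union>n. {z\<in>Z. h z = n})" by blast
  moreover have "Z = (\<Union>n. {z\<in>Z. h z = n})" by blast
  ultimately show False using assms by simp
qed

context setting
begin

definition "Wt t = parts_union Vt (sdown T le t)"
definition "xt t = (SOME x. x \<in> Vt t)"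
definition "Dt t = comp VG E (Wt t) (xt t)"
definition "Nt t = {w\<in>Wt t. \<exists>c\<in>Dt t. (c, w) \<in> E}"
definition "bad t \<longleftrightarrow> infinite (Nt t)"
definition "badch s = {t\<in>T. sdown T le t = down T le s \<and> bad t}"

lemma xt_in: "t \<in> T \<Longrightarrow> xt t \<in> Vt t"
  unfolding xt_def using parts by (simp add: some_in_eq)

lemma Vt_Wt: "t \<in> T \<Longrightarrow> Vt t \<inter> Wt t = {}"
proof (rule ccontr)
  assume t: "t \<in> T" and "Vt t \<inter> Wt t \<noteq> {}"
  then obtain x r where "x \<in> Vt t" "r \<in> sdown T le t" "x \<in> Vt r"
    by (auto simp: Wt_def parts_union_def)
  moreover then have "r \<in> T" "r \<noteq> t" by (auto simp: sdown_def)
  ultimately show False using parts_disj t by blast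
qed

lemma Vt_sub_VGW: "t \<in> T \<Longrightarrow> Vt t \<subseteq> VG - Wt t"
proof -
  assume t: "t \<in> T"
  show ?thesis using Vt_Wt[OF t] parts[OF t] by blast
qed

lemma xt_VGW: "t \<in> T \<Longrightarrow> xt t \<in> VG - Wt t"
proof -
  assume t: "t \<in> T"
  show ?thesis using Vt_sub_VGW[OF t] xt_in[OF t] by blast
qed

lemma Vt_sub_Dt: "t \<in> T \<Longrightarrow> Vt t \<subseteq> Dt t"
proof -
  assume t: "t \<in> T"
  show ?thesis unfolding Dt_def
    by (rule connected_sub_comp) (use parts[OF t] Vt_sub_VGW[OF t] xt_in[OF t] in auto)
qed

lemma Dt_sub: "t \<in> T \<Longrightarrow> Dt t \<subseteq> VG - Wt t"
proof -
  assume t: "t \<in> T"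
  show ?thesis unfolding Dt_def by (rule comp_sub2[OF xt_VGW[OF t]])
qed

lemma Dt_conn: "t \<in> T \<Longrightarrow> connected_in E (Dt t)"
proof -
  assume t: "t \<in> T"
  show ?thesis unfolding Dt_def by (rule comp_connected[OF xt_VGW[OF t] symE])
qed

lemma Dt_le: "t \<in> T \<Longrightarrow> x \<in> Dt t \<Longrightarrow> r \<in> T \<Longrightarrow> x \<in> Vt r \<Longrightarrow> (t, r) \<in> le"
  unfolding Dt_def Wt_def by (rule compP_le[OF _ xt_in]) 

lemma Dt_disj:
  assumes "t \<in> T" "t' \<in> T" "sdown T le t = sdown T le t'" "t \<noteq> t'"
  shows "Dt t \<inter> Dt t' = {}"
proof (rule ccontr)
  assume "Dt t \<inter> Dt t' \<noteq> {}"
  then obtain y where y: "y \<in> Dt t" "y \<in> Dt t'" by blast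
  have W: "Wt t' = Wt t" using assms(3) by (simp add: Wt_def)
  have "comp VG E (Wt t) y = Dt t" using comp_eq_if_mem[of y VG E "Wt t" "xt t"] y xt_VGW assms symE
    by (simp add: Dt_def)
  moreover have "comp VG E (Wt t) y = Dt t'" using comp_eq_if_mem[of y VG E "Wt t" "xt t'"] y xt_VGW[of t'] assms symE W
    by (simp add: Dt_def)
  ultimately have eq: "Dt t = Dt t'" by simp
  have "(t, t') \<in> le" using Dt_le[OF assms(1) _ assms(2) xt_in[OF assms(2)]] Vt_sub_Dt[OF assms(2)] xt_in[OF assms(2)] eq
    by blast
  moreover have "(t', t) \<in> le" using Dt_le[OF assms(2) _ assms(1) xt_in[OF assms(1)]] Vt_sub_Dt[OF assms(1)] xt_in[OF assms(1)] eq
    by blast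
  ultimately show False using le_antisym assms(4) by blast
qed

lemma Wt_countable: "t \<in> T \<Longrightarrow> countable (Wt t)"
proof -
  assume t: "t \<in> T"
  have cs: "countable (sdown T le t)"
    using all_countable[OF t] countable_subset[of "sdown T le t" "down T le t"] by (auto simp: sdown_def down_def)
  have "\<forall>r\<in>sdown T le t. countable (Vt r)"
  proof
    fix r assume r: "r \<in> sdown T le t"
    then have rT: "r \<in> T" by (auto simp: sdown_def)
    have "countable (sdown T le r)"
      using all_countable[OF rT] countable_subset[of "sdown T le r" "down T le r"] by (auto simp: sdown_def down_def)
    then show "countable (Vt r)" using parts_countable rT by blast
  qed
  then show ?thesis using cs unfolding Wt_def parts_union_def by blast
qed

end

context setting
begin

lemma badch_countable:
  assumes sT: "s \<in> T"
  shows "countable (badch s)"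
proof (rule ccontr)
  assume unc: "\<not> countable (badch s)"
  define Z where "Z = badch s"
  define Y where "Y = parts_union Vt (down T le s)"
  have ZT: "Z \<subseteq> T" by (auto simp: Z_def badch_def)
  have WZ: "\<And>t. t \<in> Z \<Longrightarrow> Wt t = Y" by (auto simp: Z_def badch_def Wt_def Y_def)
  have sdZ: "\<And>t t'. t \<in> Z \<Longrightarrow> t' \<in> Z \<Longrightarrow> sdown T le t = sdown T le t'" by (auto simp: Z_def badch_def)
  have Zne: "Z \<noteq> {}" using unc Z_def by auto
  then obtain t0 where t0: "t0 \<in> Z" by blast
  have cY: "countable Y" using Wt_countable[of t0] WZ[OF t0] ZT t0 by auto
  define N where "N t = Nt t" for t
  have NY: "\<And>t. t \<in> Z \<Longrightarrow> N t \<subseteq> Y" using WZ by (auto simp: N_def Nt_def)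
  have Ninf: "\<And>t. t \<in> Z \<Longrightarrow> infinite (N t)" by (auto simp: N_def Z_def badch_def bad_def)
  have DY: "\<And>t. t \<in> Z \<Longrightarrow> Dt t \<inter> Y = {}" using Dt_sub WZ ZT by blast
  have DVG: "\<And>t. t \<in> Z \<Longrightarrow> Dt t \<subseteq> VG" using Dt_sub ZT by blast
  have Ddisj: "\<And>t t'. t \<in> Z \<Longrightarrow> t' \<in> Z \<Longrightarrow> t \<noteq> t' \<Longrightarrow> Dt t \<inter> Dt t' = {}"
    using Dt_disj ZT sdZ by blast
  define Ybig where "Ybig = {y\<in>Y. uncountable {t\<in>Z. y \<in> N t}}"
  define Z1 where "Z1 = {t\<in>Z. N t \<subseteq> Ybig}"
  have "Z - Z1 \<subseteq> (\<Union>y\<in>Y - Ybig. {t\<in>Z. y \<in> N t})"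
    using NY by (auto simp: Z1_def Ybig_def)
  moreover have "countable (\<Union>y\<in>Y - Ybig. {t\<in>Z. y \<in> N t})"
    using cY by (auto simp: Ybig_def)
  ultimately have "countable (Z - Z1)" using countable_subset by blast
  moreover have "Z - (Z - Z1) = Z1" by (auto simp: Z1_def)
  ultimately have uZ1: "uncountable Z1"
    using uncountable_minus_countable[of Z "Z - Z1"] unc Z_def by simp
  then obtain t1 where t1: "t1 \<in> Z1" using uncountable_infinite infinite_imp_nonempty by blast
  have infYbig: "infinite Ybig" using t1 Ninf[of t1] finite_subset by (auto simp: Z1_def)
  have cYbig: "countable Ybig" using cY countable_subset by (auto simp: Ybig_def)
  define e where "e = from_nat_into Ybig"
  have ebij: "bij_betw e UNIV Ybig" unfolding e_def by (rule bij_betw_from_nat_into[OF cYbig infYbig])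
  have einj: "inj e" and erange: "range e = Ybig" using ebij by (auto simp: bij_betw_def)
  define Opt where "Opt n = {t\<in>Z. e n \<in> N t}" for n
  have "\<forall>n. infinite (Opt n)"
  proof
    fix n
    have "e n \<in> Ybig" using erange by blast
    then show "infinite (Opt n)" by (auto simp: Ybig_def Opt_def dest: countable_finite)
  qed
  then obtain g where ginj: "inj g" and gO: "\<And>n. g n \<in> Opt n" using pick_seq by blast
  have gZ: "g n \<in> Z" for n using gO by (simp add: Opt_def)
  have gN: "e n \<in> N (g n)" for n using gO by (simp add: Opt_def)
  define Z2 where "Z2 = Z1 - range g"
  have uZ2: "uncountable Z2" unfolding Z2_def by (rule uncountable_minus_countable[OF uZ1]) simp
  have Z2Z: "Z2 \<subseteq> Z" by (auto simp: Z2_def Z1_def)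
  have Z2N: "\<And>z. z \<in> Z2 \<Longrightarrow> N z \<subseteq> Ybig" by (auto simp: Z2_def Z1_def)
  have Z2g: "\<And>z n. z \<in> Z2 \<Longrightarrow> z \<noteq> g n" by (auto simp: Z2_def)
  define u where "u t = (SOME x. x \<in> Vt t \<inter> U)" for t
  have uU: "\<And>t. t \<in> T \<Longrightarrow> u t \<in> Vt t \<inter> U"
  proof -
    fix t assume "t \<in> T"
    then have "Vt t \<inter> U \<noteq> {}" using rooted by (auto simp: U_rooted_parts_def)
    then have "\<exists>x. x \<in> Vt t \<inter> U" by blast
    then show "u t \<in> Vt t \<inter> U" unfolding u_def by (rule someI_ex)
  qed
  have uD: "\<And>t. t \<in> Z \<Longrightarrow> u t \<in> Dt t"
  proof -
    fix t assume "t \<in> Z"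
    then have tT: "t \<in> T" using ZT by blast
    show "u t \<in> Dt t" using uU[OF tT] Vt_sub_Dt[OF tT] by blast
  qed
  define c where "c t y = (SOME x. x \<in> Dt t \<and> (x, y) \<in> E)" for t y
  have cD: "\<And>t y. y \<in> N t \<Longrightarrow> c t y \<in> Dt t \<and> (c t y, y) \<in> E"
  proof -
    fix t y assume "y \<in> N t"
    then have "\<exists>x. x \<in> Dt t \<and> (x, y) \<in> E" by (auto simp: N_def Nt_def)
    then show "c t y \<in> Dt t \<and> (c t y, y) \<in> E" unfolding c_def by (rule someI_ex)
  qed
  define Pth where "Pth t y = (SOME P. finite P \<and> P \<subseteq> Dt t \<and> u t \<in> P \<and> c t y \<in> P \<and> connected_in E P)" for t y
  have Pth: "\<And>t y. t \<in> Z \<Longrightarrow> y \<in> N t \<Longrightarrow>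
      finite (Pth t y) \<and> Pth t y \<subseteq> Dt t \<and> u t \<in> Pth t y \<and> c t y \<in> Pth t y \<and> connected_in E (Pth t y)"
  proof -
    fix t y assume t: "t \<in> Z" and y: "y \<in> N t"
    have "(u t, c t y) \<in> (E \<inter> (Dt t \<times> Dt t))\<^sup>*"
      using Dt_conn[of t] ZT t uD[OF t] cD[OF y] by (auto simp: connected_in_def)
    then have "\<exists>P. finite P \<and> P \<subseteq> Dt t \<and> u t \<in> P \<and> c t y \<in> P \<and> connected_in E P"
      by (rule finite_connected_path[OF _ uD[OF t] symE])
    then show "finite (Pth t y) \<and> Pth t y \<subseteq> Dt t \<and> u t \<in> Pth t y \<and> c t y \<in> Pth t y \<and> connected_in E (Pth t y)"
      unfolding Pth_def by (rule someI_ex)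
  qed
  define Bn where "Bn n = insert (e n) (Pth (g n) (e n))" for n
  define Bz where "Bz z = (\<Union>y\<in>N z. Pth z y)" for z
  have Bn_sub: "Pth (g n) (e n) \<subseteq> Dt (g n)" for n using Pth[OF gZ[of n] gN[of n]] by (elim conjE)
  have Bz_sub: "\<And>z. z \<in> Z2 \<Longrightarrow> Bz z \<subseteq> Dt z"
  proof -
    fix z assume z: "z \<in> Z2"
    then have zZ: "z \<in> Z" using Z2Z by blast
    have "\<forall>y\<in>N z. Pth z y \<subseteq> Dt z" using Pth[OF zZ] by blast
    then show "Bz z \<subseteq> Dt z" unfolding Bz_def by blast
  qed
  have enY: "e n \<in> Y" for n using erange Ybig_def by auto
  have Bn_ne: "e n \<in> Bn n" for n by (simp add: Bn_def)
  have Bz_ne: "\<And>z. z \<in> Z2 \<Longrightarrow> u z \<in> Bz z"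
  proof -
    fix z assume z: "z \<in> Z2"
    then have zZ: "z \<in> Z" using Z2Z by blast
    obtain y where y: "y \<in> N z" using Ninf[OF zZ] infinite_imp_nonempty by blast
    have "u z \<in> Pth z y" using Pth[OF zZ y] by (elim conjE)
    then show "u z \<in> Bz z" using y unfolding Bz_def by blast
  qed
  have dBnBn: "Bn n \<inter> Bn m = {}" if "n \<noteq> m" for n m
  proof -
    have "e n \<noteq> e m" using einj that by (auto dest: injD)
    moreover have "e n \<notin> Dt (g m)" using DY[OF gZ[of m]] enY[of n] by blast
    moreover have "e m \<notin> Dt (g n)" using DY[OF gZ[of n]] enY[of m] by blast
    moreover have "g n \<noteq> g m" using ginj that by (auto dest: injD)
    then have "Dt (g n) \<inter> Dt (g m) = {}" using Ddisj[OF gZ gZ] by blast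
    ultimately show ?thesis using Bn_sub[of n] Bn_sub[of m] by (auto simp: Bn_def)
  qed
  have dBnBz: "Bn n \<inter> Bz z = {}" if "z \<in> Z2" for n z
  proof -
    have zZ: "z \<in> Z" using Z2Z that by blast
    have "e n \<notin> Dt z" using DY[OF zZ] enY[of n] by blast
    moreover have "Dt (g n) \<inter> Dt z = {}" using Ddisj[OF gZ zZ] Z2g[OF that, of n] by metis
    ultimately show ?thesis using Bn_sub[of n] Bz_sub[OF that] by (auto simp: Bn_def)
  qed
  have dBzBz: "Bz z \<inter> Bz z' = {}" if "z \<in> Z2" "z' \<in> Z2" "z \<noteq> z'" for z z'
  proof -
    have "z \<in> Z" "z' \<in> Z" using Z2Z that by blast+
    then have "Dt z \<inter> Dt z' = {}" using Ddisj that(3) by blast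
    then show ?thesis using Bz_sub[OF that(1)] Bz_sub[OF that(2)] by blast
  qed
  have Bn_inj: "Bn n = Bn m \<Longrightarrow> n = m" for n m
  proof (rule ccontr)
    assume "Bn n = Bn m" "n \<noteq> m"
    then show False using dBnBn[of n m] Bn_ne[of n] by blast
  qed
  have Bz_inj: "inj_on Bz Z2"
  proof (rule inj_onI, rule ccontr)
    fix z z' assume "z \<in> Z2" "z' \<in> Z2" "Bz z = Bz z'" "z \<noteq> z'"
    then show False using dBzBz[of z z'] Bz_ne[of z] by blast
  qed
  have BnBz: "Bn n \<noteq> Bz z" if "z \<in> Z2" for n z using dBnBz[OF that, of n] Bn_ne[of n] by blast
  define B where "B = range Bn \<union> Bz ` Z2"
  define F where "F = {(Bz z, Bn n) | z n. z \<in> Z2 \<and> e n \<in> N z} \<union> {(Bn n, Bz z) | z n. z \<in> Z2 \<and> e n \<in> N z}"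
  have Bn_conn: "connected_in E (Bn n)" for n
  proof -
    have ce: "(c (g n) (e n), e n) \<in> E" using cD[OF gN[of n]] by (elim conjE)
    have pc: "connected_in E (Pth (g n) (e n))" "c (g n) (e n) \<in> Pth (g n) (e n)" using Pth[OF gZ[of n] gN[of n]] by blast+
    show ?thesis unfolding Bn_def by (rule connected_insert_edge[OF pc(1) pc(2) ce symE])
  qed
  have Bz_conn: "\<And>z. z \<in> Z2 \<Longrightarrow> connected_in E (Bz z)"
  proof -
    fix z assume z: "z \<in> Z2"
    have zZ: "z \<in> Z" using Z2Z z by blast
    have "N z \<noteq> {}" using Ninf[OF zZ] infinite_imp_nonempty by blast
    then have ne: "(\<lambda>y. Pth z y) ` N z \<noteq> {}" by blast
    have "\<forall>A\<in>(\<lambda>y. Pth z y) ` N z. connected_in E A \<and> u z \<in> A" using Pth[OF zZ] by blast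
    then have "connected_in E (\<Union>((\<lambda>y. Pth z y) ` N z))"
      by (rule connected_Union_common[OF _ ne symE])
    then show "connected_in E (Bz z)" unfolding Bz_def .
  qed
  have mb: "minor_by_branch_sets VG E B F"
    unfolding minor_by_branch_sets_def
  proof (intro conjI)
    show "\<forall>b\<in>B. b \<subseteq> VG \<and> connected_in E b"
    proof
      fix b assume "b \<in> B"
      then consider n where "b = Bn n" | z where "z \<in> Z2" "b = Bz z" by (auto simp: B_def)
      then show "b \<subseteq> VG \<and> connected_in E b"
      proof cases
        case 1
        obtain r where r: "r \<in> down T le s" "e n \<in> Vt r" using enY[of n] unfolding Y_def parts_union_def by blast
        then have "r \<in> T" by (simp add: down_def)
        then have "e n \<in> VG" using parts[of r] r(2) by blast
        moreover have "Pth (g n) (e n) \<subseteq> VG" using Bn_sub[of n] DVG[OF gZ[of n]] by blast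
        ultimately have "Bn n \<subseteq> VG" by (simp add: Bn_def)
        then show ?thesis using 1 Bn_conn[of n] by simp
      next
        case 2
        then have "z \<in> Z" using Z2Z by blast
        then show ?thesis using Bz_conn[OF 2(1)] Bz_sub[OF 2(1)] DVG[of z] 2(2) by blast
      qed
    qed
    show "pairwise disjnt B"
    proof (unfold pairwise_def disjnt_def, intro ballI impI)
      fix X X' assume X: "X \<in> B" "X' \<in> B" "X \<noteq> X'"
      consider n where "X = Bn n" | z where "z \<in> Z2" "X = Bz z" using X by (auto simp: B_def)
      then show "X \<inter> X' = {}"
      proof cases
        case 1
        consider m where "X' = Bn m" | z' where "z' \<in> Z2" "X' = Bz z'" using X by (auto simp: B_def)
        then show ?thesis
        proof cases
          case (1 m)
          then have "n \<noteq> m" using \<open>X = Bn n\<close> X(3) by blast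
          then show ?thesis using dBnBn[of n m] \<open>X = Bn n\<close> 1 by simp
        next
          case 2 then show ?thesis using dBnBz[OF 2(1), of n] \<open>X = Bn n\<close> by simp
        qed
      next
        case 2
        consider m where "X' = Bn m" | z' where "z' \<in> Z2" "X' = Bz z'" using X by (auto simp: B_def)
        then show ?thesis
        proof cases
          case (1 m) then show ?thesis using dBnBz[OF 2(1), of m] 2 by blast
        next
          case (2 z')
          then have "z \<noteq> z'" using \<open>X = Bz z\<close> X(3) by blast
          then show ?thesis using dBzBz[OF \<open>z \<in> Z2\<close> 2(1)] \<open>X = Bz z\<close> 2(2) by simp
        qed
      qed
    qed
    show "graph B F"
      unfolding graph_def
    proof (intro conjI)
      show "F \<subseteq> B \<times> B" by (auto simp: F_def B_def)
      show "sym F" unfolding sym_def F_def by blast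
      show "irrefl F"
      proof (unfold irrefl_def, rule allI, rule notI)
        fix a assume "(a, a) \<in> F"
        then obtain z n where "z \<in> Z2" "a = Bz z" "a = Bn n" unfolding F_def by blast
        then show False using BnBz by metis
      qed
    qed
    show "\<forall>(a, b)\<in>F. \<exists>x\<in>a. \<exists>y\<in>b. (x, y) \<in> E"
    proof
      fix p assume "p \<in> F"
      then obtain z n where zn: "z \<in> Z2" "e n \<in> N z" "p = (Bz z, Bn n) \<or> p = (Bn n, Bz z)"
        by (auto simp: F_def)
      have zZ: "z \<in> Z" using zn Z2Z by blast
      have "c z (e n) \<in> Pth z (e n)" using Pth[OF zZ zn(2)] by blast
      then have w: "c z (e n) \<in> Bz z" using zn(2) unfolding Bz_def by blast
      have ed: "(c z (e n), e n) \<in> E" using cD[OF zn(2)] by blast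
      then have "(e n, c z (e n)) \<in> E" using symE by (auto dest: symD)
      then show "case p of (a, b) \<Rightarrow> \<exists>x\<in>a. \<exists>y\<in>b. (x, y) \<in> E"
        using zn(3) w ed Bn_ne by auto
    qed
  qed
  have rm: "rooted_minor VG E U B F"
    unfolding rooted_minor_def
  proof (intro conjI mb ballI)
    fix b assume "b \<in> B"
    then consider n where "b = Bn n" | z where "z \<in> Z2" "b = Bz z" by (auto simp: B_def)
    then show "b \<inter> U \<noteq> {}"
    proof cases
      case 1
      have "u (g n) \<in> Bn n" using Pth[OF gZ[of n] gN[of n]] by (simp add: Bn_def)
      moreover have "u (g n) \<in> U" using uU gZ ZT by blast
      ultimately show ?thesis using 1 by blast
    next
      case 2
      then show ?thesis using Bz_ne uU Z2Z ZT by blast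
    qed
  qed
  have cB: "\<forall>b\<in>B. countable b"
  proof
    fix b assume "b \<in> B"
    then consider n where "b = Bn n" | z where "z \<in> Z2" "b = Bz z" by (auto simp: B_def)
    then show "countable b"
    proof cases
      case 1 then show ?thesis using Pth[OF gZ[of n] gN[of n]] by (auto simp: Bn_def countable_finite)
    next
      case 2
      have "countable (N z)" using NY Z2Z 2(1) cY countable_subset by blast
      moreover have "\<forall>y\<in>N z. countable (Pth z y)" using Pth 2(1) Z2Z by (blast intro: countable_finite)
      ultimately show ?thesis using 2 by (auto simp: Bz_def)
    qed
  qed
  have "countable_colouring_number B F" using minorhyp rm cB by blast
  then obtain r where r: "well_order_on B r"
    and rfin: "\<forall>x\<in>B. finite {y\<in>B. (y, x) \<in> r \<and> y \<noteq> x \<and> (y, x) \<in> F}"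
    unfolding countable_colouring_number_def by blast
  have tot: "total_on B r" using r by (simp add: well_order_on_def linear_order_on_def)
  have BnB: "Bn n \<in> B" for n by (simp add: B_def)
  have BzB: "\<And>z. z \<in> Z2 \<Longrightarrow> Bz z \<in> B" by (simp add: B_def)
  have hex: "\<exists>n. e n \<in> N z \<and> (Bz z, Bn n) \<in> r" if z: "z \<in> Z2" for z
  proof -
    let ?A = "{n. e n \<in> N z}"
    have "N z = e ` ?A" using Z2N[OF z] erange by blast
    moreover have "infinite (N z)" using Ninf[of z] z Z2Z by blast
    ultimately have infA: "infinite ?A" using finite_imageI[of ?A e] by auto
    let ?C = "{n. e n \<in> N z \<and> (Bn n, Bz z) \<in> r}"
    have "Bn ` ?C \<subseteq> {y\<in>B. (y, Bz z) \<in> r \<and> y \<noteq> Bz z \<and> (y, Bz z) \<in> F}"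
    proof
      fix y assume "y \<in> Bn ` ?C"
      then obtain n where n: "e n \<in> N z" "(Bn n, Bz z) \<in> r" "y = Bn n" by blast
      have "(Bn n, Bz z) \<in> F" unfolding F_def using z n(1) by blast
      then show "y \<in> {y\<in>B. (y, Bz z) \<in> r \<and> y \<noteq> Bz z \<and> (y, Bz z) \<in> F}"
        using BnB[of n] BnBz[OF z, of n] n by simp
    qed
    moreover have "finite {y\<in>B. (y, Bz z) \<in> r \<and> y \<noteq> Bz z \<and> (y, Bz z) \<in> F}" using rfin BzB[OF z] by blast
    ultimately have "finite (Bn ` ?C)" by (rule finite_subset)
    moreover have "inj_on Bn ?C" by (rule inj_onI) (rule Bn_inj)
    ultimately have finC: "finite ?C" by (rule finite_imageD)
    obtain n where n: "n \<in> ?A" "n \<notin> ?C" using exists_not_in_finite[OF infA finC] by blast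
    then have "(Bn n, Bz z) \<notin> r" by blast
    moreover have "Bn n \<noteq> Bz z" using BnBz[OF z] .
    moreover have "Bn n \<in> B" "Bz z \<in> B" using BnB BzB[OF z] by blast+
    ultimately have "(Bz z, Bn n) \<in> r" using tot unfolding total_on_def by blast
    then show ?thesis using n by blast
  qed
  define h where "h z = (SOME n. e n \<in> N z \<and> (Bz z, Bn n) \<in> r)" for z
  have hprop: "\<And>z. z \<in> Z2 \<Longrightarrow> e (h z) \<in> N z \<and> (Bz z, Bn (h z)) \<in> r"
  proof -
    fix z assume "z \<in> Z2"
    then have "\<exists>n. e n \<in> N z \<and> (Bz z, Bn n) \<in> r" by (rule hex)
    then show "e (h z) \<in> N z \<and> (Bz z, Bn (h z)) \<in> r" unfolding h_def by (rule someI_ex)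
  qed
  obtain n where infn: "infinite {z\<in>Z2. h z = n}" using uncountable_fiber[OF uZ2] by blast
  have "Bz ` {z\<in>Z2. h z = n} \<subseteq> {y\<in>B. (y, Bn n) \<in> r \<and> y \<noteq> Bn n \<and> (y, Bn n) \<in> F}"
  proof
    fix y assume "y \<in> Bz ` {z\<in>Z2. h z = n}"
    then obtain z where z: "z \<in> Z2" "h z = n" "y = Bz z" by blast
    then show "y \<in> {y\<in>B. (y, Bn n) \<in> r \<and> y \<noteq> Bn n \<and> (y, Bn n) \<in> F}"
      using hprop[OF z(1)] BzB[OF z(1)] BnBz[OF z(1)] by (auto simp: F_def)
  qed
  moreover have "finite {y\<in>B. (y, Bn n) \<in> r \<and> y \<noteq> Bn n \<and> (y, Bn n) \<in> F}" using rfin BnB by blast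
  ultimately have "finite (Bz ` {z\<in>Z2. h z = n})" by (rule finite_subset)
  moreover have "inj_on Bz {z\<in>Z2. h z = n}" using Bz_inj by (rule inj_on_subset) blast
  ultimately have "finite {z\<in>Z2. h z = n}" by (rule finite_imageD)
  then show False using infn by blast
qed

end

lemma lepoll_iff_ordLeq: "A \<lesssim> B \<longleftrightarrow> (BNF_Cardinal_Order_Relation.card_of A, BNF_Cardinal_Order_Relation.card_of B) \<in> BNF_Wellorder_Constructions.ordLeq"
  unfolding lepoll_def by (rule card_of_ordLeq)

lemma countable_lepoll_infinite:
  assumes "countable A" "infinite X" shows "A \<lesssim> X"
proof -
  obtain f :: "_ \<Rightarrow> nat" where "inj_on f A" using assms(1) by (auto simp: countable_def)
  then have "A \<lesssim> (UNIV :: nat set)" unfolding lepoll_def by blast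
  moreover have "(UNIV :: nat set) \<lesssim> X" using assms(2) infinite_le_lepoll by blast
  ultimately show ?thesis by (rule lepoll_trans)
qed

lemma UN_lepoll_infinite:
  assumes "infinite X" "I \<lesssim> X" "\<forall>i\<in>I. A i \<lesssim> X"
  shows "(\<Union>i\<in>I. A i) \<lesssim> X"
  using card_of_UNION_ordLeq_infinite[of X I A] assms unfolding lepoll_iff_ordLeq by blast

context setting
begin

lemma main:
  assumes XT: "X \<subseteq> T" and Xinf: "infinite X"
  shows "\<exists>T'. rooted_subtree T le T' \<and> X \<subseteq> T' \<and> T' \<approx> X \<and>
                 finite_adhesion_towards VG E (parts_union Vt T') U"
proof -
  have cparts: "\<forall>t\<in>T. countable (Vt t)"
  proof
    fix t assume t: "t \<in> T"
    have "countable (sdown T le t)"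
      using all_countable[OF t] countable_subset[of "sdown T le t" "down T le t"] by (auto simp: sdown_def down_def)
    then show "countable (Vt t)" using parts_countable t by blast
  qed
  obtain prec where prec1: "\<forall>x\<in>T. finite {y\<in>T. (y, x) \<in> prec \<and> y \<noteq> x \<and> (y, x) \<in> Fc}"
    and prec2: "\<forall>x\<in>T. \<forall>y\<in>T. x \<noteq> y \<longrightarrow> (x, y) \<in> prec \<or> (y, x) \<in> prec"
    using minor_order[OF subset_refl cparts] by (elim exE conjE)
  define f where "f b = {y\<in>T. (y, b) \<in> prec \<and> y \<noteq> b \<and> (y, b) \<in> Fc}" for b
  define gg where "gg x = insert x (down T le x \<union> f x \<union> badch x)" for x
  define stp where "stp S = (\<Union>x\<in>S. gg x)" for S
  define Sn where "Sn n = (stp ^^ n) X" for n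
  define T' where "T' = (\<Union>n. Sn n)"
  have Sn0: "Sn 0 = X" by (simp add: Sn_def)
  have SnS: "Sn (Suc n) = stp (Sn n)" for n by (simp add: Sn_def)
  have ggT: "x \<in> T \<Longrightarrow> gg x \<subseteq> T" for x
    by (auto simp: gg_def down_def f_def badch_def)
  have ggc: "x \<in> T \<Longrightarrow> countable (gg x)" for x
  proof -
    assume x: "x \<in> T"
    have "finite (f x)" using prec1 x by (simp add: f_def)
    then show ?thesis using all_countable[OF x] badch_countable[OF x] countable_finite
      by (simp add: gg_def)
  qed
  have SnT: "Sn n \<subseteq> T" for n
  proof (induct n)
    case 0 then show ?case using XT by (simp add: Sn0)
  next
    case (Suc n) then show ?case using ggT by (auto simp: SnS stp_def)
  qed
  have Snle: "Sn n \<lesssim> X" for n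
  proof (induct n)
    case 0 then show ?case by (simp add: Sn0)
  next
    case (Suc n)
    have "\<forall>x\<in>Sn n. gg x \<lesssim> X" using ggc SnT countable_lepoll_infinite[OF _ Xinf] by blast
    then show ?case unfolding SnS stp_def by (rule UN_lepoll_infinite[OF Xinf Suc])
  qed
  have T'le: "T' \<lesssim> X"
    unfolding T'_def
  proof (rule UN_lepoll_infinite[OF Xinf])
    show "(UNIV :: nat set) \<lesssim> X" using Xinf infinite_le_lepoll by blast
    show "\<forall>n\<in>UNIV. Sn n \<lesssim> X" using Snle by blast
  qed
  have XT': "X \<subseteq> T'" using Sn0 by (auto simp: T'_def)
  have T'T: "T' \<subseteq> T" using SnT by (auto simp: T'_def)
  have clos: "\<And>x. x \<in> T' \<Longrightarrow> gg x \<subseteq> T'"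
  proof -
    fix x assume "x \<in> T'"
    then obtain n where "x \<in> Sn n" by (auto simp: T'_def)
    then have "gg x \<subseteq> Sn (Suc n)" by (auto simp: SnS stp_def)
    then show "gg x \<subseteq> T'" by (auto simp: T'_def)
  qed
  have dclos: "\<And>x s. x \<in> T' \<Longrightarrow> (s, x) \<in> le \<Longrightarrow> s \<in> T'"
  proof -
    fix x s assume "x \<in> T'" "(s, x) \<in> le"
    then have "s \<in> gg x" using le_T by (auto simp: gg_def down_def)
    then show "s \<in> T'" using clos \<open>x \<in> T'\<close> by blast
  qed
  have rst: "rooted_subtree T le T'" unfolding rooted_subtree_def using T'T dclos by blast
  have eqp: "T' \<approx> X" by (rule lepoll_antisym[OF T'le subset_imp_lepoll[OF XT']])
  define W where "W = parts_union Vt T'"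
  have fa: "finite_adhesion_towards VG E W U"
    unfolding finite_adhesion_towards_def
  proof (intro allI impI)
    fix C assume CC: "component_of VG E W C \<and> C \<inter> U \<noteq> {}"
    then have comp: "component_of VG E W C" and "C \<inter> U \<noteq> {}" by auto
    then obtain u0 where u0: "u0 \<in> C" "u0 \<in> U" by blast
    have CW: "C \<subseteq> VG - W" using comp by (simp add: component_of_def)
    obtain q where q: "q \<in> T" "u0 \<in> Vt q" using Uparts u0 by (auto simp: parts_union_def)
    have qT': "q \<notin> T'" using u0 q CW by (auto simp: W_def parts_union_def)
    obtain t where t: "t \<in> {t\<in>T. t \<notin> T' \<and> (t, q) \<in> le}"
      and tmin: "\<And>y. (y, t) \<in> le \<Longrightarrow> y \<noteq> t \<Longrightarrow> y \<notin> {t\<in>T. t \<notin> T' \<and> (t, q) \<in> le}"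
      using lt_min[of q "{t\<in>T. t \<notin> T' \<and> (t, q) \<in> le}"] q qT' le_refl by blast
    have tT: "t \<in> T" "t \<notin> T'" "(t, q) \<in> le" using t by auto
    have sdT': "sdown T le t \<subseteq> T'"
    proof
      fix y assume "y \<in> sdown T le t"
      then have y: "y \<in> T" "(y, t) \<in> le" "y \<noteq> t" by (auto simp: sdown_def)
      then have "(y, q) \<in> le" using tT le_trans by blast
      then show "y \<in> T'" using tmin[OF y(2,3)] y(1) by blast
    qed
    obtain r0 where r0: "r0 \<in> T" "\<forall>t\<in>T. (r0, t) \<in> le" using root_ex by blast
    obtain x1 where "x1 \<in> X" using Xinf infinite_imp_nonempty by blast
    then have "r0 \<in> T'" using dclos XT' XT r0 by blast
    then have "r0 \<in> sdown T le t" using r0 tT by (auto simp: sdown_def)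
    then have sdne: "sdown T le t \<noteq> {}" by blast
    show "finite {w\<in>W. \<exists>c\<in>C. (c, w) \<in> E}"
    proof (cases "\<exists>s\<in>sdown T le t. \<forall>s'\<in>sdown T le t. (s', s) \<in> le")
      case True
      then obtain s where s: "s \<in> sdown T le t" "\<forall>s'\<in>sdown T le t. (s', s) \<in> le" by blast
      have sT: "s \<in> T" "(s, t) \<in> le" "s \<noteq> t" using s by (auto simp: sdown_def)
      have sd: "sdown T le t = down T le s"
      proof
        show "sdown T le t \<subseteq> down T le s" using s(2) by (auto simp: down_def sdown_def)
        show "down T le s \<subseteq> sdown T le t"
        proof
          fix y assume "y \<in> down T le s"
          then have y: "y \<in> T" "(y, s) \<in> le" by (auto simp: down_def)
          then have "(y, t) \<in> le" using sT le_trans by blast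
          moreover have "y \<noteq> t" using y sT le_antisym by blast
          ultimately show "y \<in> sdown T le t" using y by (auto simp: sdown_def)
        qed
      qed
      have nb: "\<not> bad t"
      proof
        assume "bad t"
        then have "t \<in> badch s" using sd tT by (auto simp: badch_def)
        then have "t \<in> gg s" by (auto simp: gg_def)
        moreover have "s \<in> T'" using sdT' s(1) by blast
        ultimately show False using clos tT by blast
      qed
      then have finN: "finite (Nt t)" by (simp add: bad_def)
      let ?x0 = "xt t"
      have x0: "?x0 \<in> Vt t" using xt_in tT by blast
      have PW: "Pint t q \<subseteq> VG - W"
      proof
        fix v assume v: "v \<in> Pint t q"
        then obtain r where r: "r \<in> T" "(t, r) \<in> le" "(r, q) \<in> le" "v \<in> Vt r"
          by (auto simp: Pint_def parts_union_def)
        have "v \<in> VG" using Pint_sub v by blast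
        moreover have "v \<notin> W"
        proof
          assume "v \<in> W"
          then obtain r' where "r' \<in> T'" "v \<in> Vt r'" by (auto simp: W_def parts_union_def)
          then have "r' = r" using parts_disj r T'T by blast
          then show False using dclos \<open>r' \<in> T'\<close> r(2) tT by blast
        qed
        ultimately show "v \<in> VG - W" by blast
      qed
      have "(?x0, u0) \<in> (E \<inter> (Pint t q \<times> Pint t q))\<^sup>*" using conn_up[OF tT(3)] q(2) x0 by blast
      then have "(u0, ?x0) \<in> (E \<inter> (Pint t q \<times> Pint t q))\<^sup>*"
        by (rule rtrancl_sym[OF sym_restr[OF symE]])
      then have "(u0, ?x0) \<in> (E \<inter> ((VG - W) \<times> (VG - W)))\<^sup>*" by (rule rtrancl_restr_mono) (rule PW)
      then have "?x0 \<in> comp VG E W u0" by (simp add: comp_def)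
      moreover have "C = comp VG E W u0" by (rule component_eq_comp[OF comp u0(1) symE])
      ultimately have x0C: "?x0 \<in> C" by simp
      have Ceq: "C = comp VG E W ?x0" by (rule component_eq_comp[OF comp x0C symE])
      have WtW: "Wt t \<subseteq> W" using sdT' by (auto simp: Wt_def W_def parts_union_def)
      have CD: "C \<subseteq> Dt t" unfolding Ceq Dt_def by (rule comp_mono[OF WtW])
      have "{w\<in>W. \<exists>c\<in>C. (c, w) \<in> E} \<subseteq> Nt t"
      proof
        fix w assume "w \<in> {w\<in>W. \<exists>c\<in>C. (c, w) \<in> E}"
        then obtain c where w: "w \<in> W" "c \<in> C" "(c, w) \<in> E" by blast
        show "w \<in> Nt t"
        proof (cases "w \<in> Wt t")
          case True then show ?thesis using w CD by (auto simp: Nt_def)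
        next
          case False
          have "w \<in> VG" using w(3) E_sub by blast
          then have "w \<in> Dt t" unfolding Dt_def
            using comp_edge[of c VG E "Wt t" ?x0 w] w CD False xt_VGW[OF tT(1)] by (simp add: Dt_def subset_iff)
          moreover obtain r where r: "r \<in> T'" "w \<in> Vt r" using w(1) by (auto simp: W_def parts_union_def)
          ultimately have "(t, r) \<in> le" using Dt_le[OF tT(1)] T'T by blast
          then show ?thesis using dclos r tT by blast
        qed
      qed
      then show ?thesis using finN finite_subset by blast
    next
      case False
      have nomax: "\<forall>i\<in>sdown T le t. \<exists>j\<in>sdown T le t. (i, j) \<in> le \<and> i \<noteq> j"
      proof
        fix i assume i: "i \<in> sdown T le t"
        then obtain j where j: "j \<in> sdown T le t" "(j, i) \<notin> le" using False by blast
        have "(i, t) \<in> le" "(j, t) \<in> le" using i j by (auto simp: sdown_def)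
        then have "(i, j) \<in> le \<or> (j, i) \<in> le" by (rule down_chain)
        then have "(i, j) \<in> le" using j by blast
        moreover have "i \<noteq> j" using j(2) i le_refl by (auto simp: sdown_def)
        ultimately show "\<exists>j\<in>sdown T le t. (i, j) \<in> le \<and> i \<noteq> j" using j(1) by blast
      qed
      have inf: "infinite {u\<in>sdown T le t. (u, t) \<in> Fc}"
        by (rule limit_nbrs[OF tT(1) refl sdne nomax])
      have fin: "finite (f t)" using prec1 tT by (simp add: f_def)
      obtain b where b: "b \<in> {u\<in>sdown T le t. (u, t) \<in> Fc}" "b \<notin> f t"
        using exists_not_in_finite[OF inf fin] by blast
      have bT: "b \<in> T" "b \<noteq> t" "(b, t) \<in> Fc" "b \<in> T'" using b sdT' by (auto simp: sdown_def)
      have "(b, t) \<notin> prec" using b(2) bT by (simp add: f_def)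
      then have "(t, b) \<in> prec" using prec2 bT tT by blast
      moreover have "(t, b) \<in> Fc" using Fc_sym bT by blast
      ultimately have "t \<in> f b" using tT bT by (auto simp: f_def)
      then have "t \<in> gg b" by (simp add: gg_def)
      then have "t \<in> T'" using clos bT by blast
      then show ?thesis using tT by blast
    qed
  qed
  show ?thesis using rst XT' eqp fa unfolding W_def by blast
qed

end

theorem lemma5p4:
  fixes VG :: "'v set" and E :: "('v \<times> 'v) set" and U :: "'v set"
    and T :: "'t set" and le :: "('t \<times> 't) set" and Vt :: "'t \<Rightarrow> 'v set"
  assumes "graph VG E"
    and "connected_in E VG"
    and "U \<subseteq> VG"
    and "\<forall>B F. rooted_minor VG E U B F \<and> (\<forall>b\<in>B. countable b)
               \<longrightarrow> countable_colouring_number B F"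
    and "normal_semi_partition_tree VG E T le Vt"
    and "slim T le Vt"
    and "U_rooted_parts T Vt U"
    and "U \<subseteq> parts_union Vt T"
  shows "\<forall>X. X \<subseteq> T \<and> infinite X \<longrightarrow>
           (\<exists>T'. rooted_subtree T le T' \<and> X \<subseteq> T' \<and> T' \<approx> X \<and>
                 finite_adhesion_towards VG E (parts_union Vt T') U)"
proof (intro allI impI)
  interpret setting VG E U T le Vt
    using assms by (unfold_locales) auto
  fix X assume "X \<subseteq> T \<and> infinite X"
  then show "\<exists>T'. rooted_subtree T le T' \<and> X \<subseteq> T' \<and> T' \<approx> X \<and>
                 finite_adhesion_towards VG E (parts_union Vt T') U"
    using main by blast
qed

end
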